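(* Let $\Delta>0$, $\gamma\in\mathbb{R}$, $\lambda>0$, let $\nu$ be any finite measure on $\mathbb{R}$ with $\nu(\mathbb{R})=\lambda$, let $\varphi(u)=\exp(\Delta(i\gamma u+\mathcal{F}\nu(u)-\lambda))$, and let $K$ be a kernel function with $K,\mathcal{F}K\in L^1(\mathbb{R})$. Then for every fixed $h>0$, $$\mathcal{F}^{-1}[\varphi^{-1}(-\cdot)\mathcal{F}K_h](x)=\big(\mathcal{F}^{-1}[\varphi^{-1}(-\cdot)]*K_h\big)(x)\quad\text{for all }x\in\mathbb{R},$$ and consequently, if moreover $K,g\in L^2(\mathbb{R})$, $$\mathcal{F}^{-1}[\mathcal{F}g\,\varphi^{-1}(-\cdot)\mathcal{F}K_h](x)=\big(g*K_h*\mathcal{F}^{-1}[\varphi^{-1}(-\cdot)]\big)(x)\quad\text{for all }x\in\mathbb{R}.$$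
   Context: $\mathcal{F}\mu(u)=\int e^{iux}\mu(dx)$ (finite measures, $L^1$ and, via Plancherel, $L^2$ functions); $\mathcal{F}^{-1}$ is the inverse transform, $\mathcal{F}^{-1}g(x)=(2\pi)^{-1}\int e^{-iux}g(u)du$ for integrable $g$. $\varphi^{-1}=1/\varphi$. $\mathcal{F}^{-1}[\varphi^{-1}(-\cdot)]$ denotes the finite signed measure $e^{\lambda\Delta}\delta_{\gamma\Delta}*\sum_{k\ge0}\bar\nu^{*k}(-\Delta)^k/k!$, where $\bar\nu(A)=\nu(-A)$ and $\bar\nu^{*0}=\delta_0$. $K_h=h^{-1}K(\cdot/h)$; convolution of a function with a finite signed measure is $f*\mu(x)=\int f(x-y)\mu(dy)$. *)

theory Defs
  imports "HOL-Probability.Probability"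
begin

definition FT :: "(real \<Rightarrow> real) \<Rightarrow> real \<Rightarrow> complex" where
  "FT f u = (CLINT x|lborel. iexp (u * x) * complex_of_real (f x))"

definition iFT :: "(real \<Rightarrow> complex) \<Rightarrow> real \<Rightarrow> complex" where
  "iFT G x = complex_of_real (1 / (2 * pi)) * (CLINT u|lborel. iexp (- (u * x)) * G u)"

definition plancherel_FT :: "(real \<Rightarrow> real) \<Rightarrow> (real \<Rightarrow> complex) \<Rightarrow> bool" where
  "plancherel_FT g G \<longleftrightarrow>
     G \<in> borel_measurable borel \<and> integrable lborel (\<lambda>u. (cmod (G u))\<^sup>2) \<and>
     ((\<lambda>n::nat. LINT u|lborel.
         (cmod (G u - FT (\<lambda>x. indicator {- real n..real n} x * g x) u))\<^sup>2) \<longlonglongrightarrow> 0)"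

definition phi :: "real \<Rightarrow> real \<Rightarrow> real \<Rightarrow> real measure \<Rightarrow> real \<Rightarrow> complex" where
  "phi \<Delta> \<gamma> lam \<nu> u =
     exp (complex_of_real \<Delta> * (\<i> * complex_of_real (\<gamma> * u) + char \<nu> u - complex_of_real lam))"

definition Kh :: "(real \<Rightarrow> real) \<Rightarrow> real \<Rightarrow> real \<Rightarrow> real" where
  "Kh K h x = K (x / h) / h"

definition refl_meas :: "real measure \<Rightarrow> real measure" where
  "refl_meas \<nu> = distr \<nu> borel uminus"

primrec conv_pow :: "real measure \<Rightarrow> nat \<Rightarrow> real measure" where
  "conv_pow N 0 = return borel 0"
| "conv_pow N (Suc k) = convolution N (conv_pow N k)"

text \<open>Convolution f * mu of a function with the finite signed measure
  mu = F^{-1}[phi^{-1}(-.)] = e^{lambda Delta} delta_{gamma Delta} * sum_k nu_bar^{*k} (-Delta)^k / k!,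
  i.e. (f * mu)(x) = int f(x - y) mu(dy).\<close>
definition conv_inv_meas ::
  "(real \<Rightarrow> complex) \<Rightarrow> real \<Rightarrow> real \<Rightarrow> real \<Rightarrow> real measure \<Rightarrow> real \<Rightarrow> complex" where
  "conv_inv_meas f \<Delta> \<gamma> lam \<nu> x =
     complex_of_real (exp (lam * \<Delta>)) *
     (\<Sum>k. complex_of_real ((- \<Delta>) ^ k / fact k) *
        (CLINT y|conv_pow (refl_meas \<nu>) k. f (x - \<gamma> * \<Delta> - y)))"

definition fconv :: "(real \<Rightarrow> real) \<Rightarrow> (real \<Rightarrow> real) \<Rightarrow> real \<Rightarrow> real" where
  "fconv f k x = (LINT y|lborel. f (x - y) * k y)"

end

theory Submission
  imports Defs
begin


lemma norm_iexp[simp]: "norm (iexp x) = 1"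
  by (simp add: norm_exp_i_times)

lemma iexp_add: "iexp (a + b) = iexp a * iexp b"
  by (simp add: exp_add[symmetric] distrib_left)

lemma gauss_ft:
  fixes a w :: real assumes a: "a > 0"
  shows "(\<integral>u. iexp (u * w) * complex_of_real (exp (-((u/a)^2)/2)) \<partial>lborel)
        = complex_of_real (a * sqrt (2*pi) * exp (-((a*w)^2)/2))"
proof -
  have "(\<integral>u. iexp (u * w) * complex_of_real (exp (-((u/a)^2)/2)) \<partial>lborel)
      = \<bar>a\<bar> *\<^sub>R (CLINT x|lborel. iexp ((0 + a*x) * w) * complex_of_real (exp (-(((0 + a*x)/a)^2)/2)))"
    using a by (intro lborel_integral_real_affine) auto
  also have "\<dots> = a *\<^sub>R (CLINT x|lborel. iexp ((a*w) * x) * complex_of_real (exp (-(x^2)/2)))"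
    using a by (simp add: mult_ac)
  also have "(CLINT x|lborel. iexp ((a*w) * x) * complex_of_real (exp (-(x^2)/2)))
      = sqrt (2*pi) *\<^sub>R (CLINT x|lborel. std_normal_density x *\<^sub>R iexp ((a*w) * x))"
    by (simp add: std_normal_density_def scaleR_conv_of_real mult_ac)
  also have "(CLINT x|lborel. std_normal_density x *\<^sub>R iexp ((a*w) * x)) = char std_normal_distribution (a*w)"
    unfolding char_def
    by (subst integral_density) (auto simp: normal_density_nonneg)
  also have "\<dots> = complex_of_real (exp (-((a*w)^2)/2))"
    by (simp add: char_std_normal_distribution)
  finally show ?thesis by (simp add: scaleR_conv_of_real mult_ac)
qed


lemma cont_borel: "continuous_on UNIV (f::real\<Rightarrow>real) \<Longrightarrow> f \<in> borel_measurable borel"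
  by (simp add: borel_measurable_continuous_onI)

lemma integrable_gauss:
  fixes a :: real assumes a: "a > 0"
  shows "integrable lborel (\<lambda>u. exp (-((u/a)^2)/2))"
proof -
  have "integrable lborel (\<lambda>z. sqrt (2*pi) * std_normal_density z)"
    using integrable_std_normal_moment[of 0] by simp
  then have "integrable lborel (\<lambda>z::real. exp (-(z^2)/2))"
    by (simp add: std_normal_density_def)
  then have "integrable lborel (\<lambda>u. (\<lambda>z::real. exp (-(z^2)/2)) (0 + (1/a) * u))"
    using a by (intro lborel_integrable_real_affine) auto
  then show ?thesis by simp
qed

lemma integral_std_normal: "(\<integral>s. std_normal_density s \<partial>lborel) = 1"
  using integral_std_normal_moment_even[of 0] by simp

lemma integrable_std_normal: "integrable lborel std_normal_density"
  using integrable_std_normal_moment[of 0] by simp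


lemma snd_bound:
  fixes a w :: real assumes a: "a \<ge> 1" and w: "\<bar>w\<bar> > 1"
  shows "a * std_normal_density (a * w) \<le> 2 / (a * w^2)"
proof -
  have p: "0 < a * w^2" using a w by (auto intro!: mult_pos_pos)
  define t where "t = (a*w)^2/2"
  have t0: "t \<ge> 0" unfolding t_def by simp
  have "w \<noteq> 0" using w by auto
  then have tp: "t > 0" using a unfolding t_def by simp
  have "1 + t \<le> exp t" by (rule exp_ge_add_one_self)
  have e: "exp (-((a*w)^2)/2) = inverse (exp t)" by (simp add: t_def exp_minus[symmetric])
  have "a * inverse (exp t) \<le> a / (1 + t)"
    using a t0 \<open>1 + t \<le> exp t\<close> mult_left_mono[OF \<open>1 + t \<le> exp t\<close>, of a]
    by (simp add: field_simps)
  also have "a / (1 + t) \<le> a / t"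
    using a tp by (intro divide_left_mono) auto
  also have "a / t = 2 / (a * w^2)"
    using a p by (simp add: t_def power_mult_distrib power2_eq_square field_simps)
  finally have 1: "a * exp (-((a*w)^2)/2) \<le> 2 / (a * w^2)" using e by simp
  have 2: "1 / sqrt (2*pi) \<le> 1"
    using pi_gt3 by simp
  have 3: "0 \<le> a * exp (-((a*w)^2)/2)" using a by simp
  have "a * std_normal_density (a * w) = (1 / sqrt (2*pi)) * (a * exp (-((a*w)^2)/2))"
    unfolding std_normal_density_def by simp
  also have "\<dots> \<le> a * exp (-((a*w)^2)/2)"
    using 2 3 by (intro mult_left_le_one_le) auto
  finally show ?thesis using 1 by linarith
qed

lemma snd_bound1:
  fixes a w :: real assumes a: "a \<ge> 1" and w: "\<bar>w\<bar> > 1"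
  shows "a * std_normal_density (a * w) \<le> 2"
proof -
  have "1 \<le> \<bar>w\<bar>^2" using w by (intro one_le_power) auto
  then have "1 \<le> w^2" by simp
  then have "1 \<le> a * w^2" using a by (metis mult_mono mult_1 zero_le_one order_trans)
  then have "2 / (a * w^2) \<le> 2" by (simp add: divide_simps)
  then show ?thesis using snd_bound[OF a w] by linarith
qed


lemma isCont_of_cont: "continuous_on UNIV f \<Longrightarrow> isCont f x"
  by (simp add: continuous_on_eq_continuous_at)

lemma approx_id:
  fixes f :: "real \<Rightarrow> real" and x :: real
  assumes cont: "continuous_on UNIV f" and int: "integrable lborel f"
  shows "(\<lambda>n. \<integral>y. f y * ((real n + 1) * std_normal_density ((real n + 1) * (y - x))) \<partial>lborel) \<longlonglongrightarrow> f x"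
proof -
  define a :: "nat \<Rightarrow> real" where "a n = real n + 1" for n
  have a1: "a n \<ge> 1" for n by (simp add: a_def)
  have ainf: "filterlim a at_top sequentially"
    unfolding a_def by (subst add.commute) (intro filterlim_tendsto_add_at_top[OF tendsto_const] filterlim_real_sequentially)
  have [measurable]: "f \<in> borel_measurable borel" using cont by (rule cont_borel)
  define k where "k n y = a n * std_normal_density (a n * (y - x))" for n y
  have k0: "k n y \<ge> 0" for n y using a1[of n] by (simp add: k_def normal_density_nonneg)
  have k_le: "k n y \<le> a n" for n y
  proof -
    have "std_normal_density (a n * (y - x)) \<le> 1"
      unfolding std_normal_density_def using pi_gt3
      by (intro mult_le_one) (auto simp: divide_simps)
    then show ?thesis unfolding k_def using a1[of n] by (simp add: mult_left_le)
  qed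
  define I where "I = {x-1..x+1}"
  define f1 where "f1 y = indicator I y * f y" for y
  define f2 where "f2 y = indicator (- I) y * f y" for y
  have I[measurable]: "I \<in> sets borel" unfolding I_def by simp
  have f12: "f y = f1 y + f2 y" for y by (simp add: f1_def f2_def indicator_def)
  have [measurable]: "f1 \<in> borel_measurable borel" "f2 \<in> borel_measurable borel"
    unfolding f1_def f2_def by measurable
  have kmeas[measurable]: "k n \<in> borel_measurable borel" for n unfolding k_def by measurable
  have intf1: "integrable lborel (\<lambda>y. f1 y * k n y)" for n
  proof (rule Bochner_Integration.integrable_bound)
    show "integrable lborel (\<lambda>y. a n * f y)" using int by simp
    show "AE y in lborel. norm (f1 y * k n y) \<le> norm (a n * f y)"
    proof (intro AE_I2)
      fix y
      have "\<bar>f1 y\<bar> \<le> \<bar>f y\<bar>" by (simp add: f1_def indicator_def)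
      then have "\<bar>f1 y\<bar> * k n y \<le> \<bar>f y\<bar> * a n" using k0 k_le by (intro mult_mono) auto
      then show "norm (f1 y * k n y) \<le> norm (a n * f y)"
        using a1[of n] k0[of n y] by (simp add: abs_mult mult.commute)
    qed
  qed measurable
  have intf2: "integrable lborel (\<lambda>y. f2 y * k n y)" for n
  proof (rule Bochner_Integration.integrable_bound)
    show "integrable lborel (\<lambda>y. a n * f y)" using int by simp
    show "AE y in lborel. norm (f2 y * k n y) \<le> norm (a n * f y)"
    proof (intro AE_I2)
      fix y
      have "\<bar>f2 y\<bar> \<le> \<bar>f y\<bar>" by (simp add: f2_def indicator_def)
      then have "\<bar>f2 y\<bar> * k n y \<le> \<bar>f y\<bar> * a n" using k0 k_le by (intro mult_mono) auto
      then show "norm (f2 y * k n y) \<le> norm (a n * f y)"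
        using a1[of n] k0[of n y] by (simp add: abs_mult mult.commute)
    qed
  qed measurable
  have split: "(\<integral>y. f y * k n y \<partial>lborel) = (\<integral>y. f1 y * k n y \<partial>lborel) + (\<integral>y. f2 y * k n y \<partial>lborel)" for n
    using intf1 intf2 by (simp add: f12 distrib_right)
  obtain M where M: "\<And>y. y \<in> I \<Longrightarrow> \<bar>f y\<bar> \<le> M"
  proof -
    have "compact (f ` I)" unfolding I_def
      by (intro compact_continuous_image continuous_on_subset[OF cont]) auto
    then have "bounded (f ` I)" by (rule compact_imp_bounded)
    then show ?thesis using that unfolding bounded_iff by auto
  qed
  have M0: "M \<ge> 0" using M[of x] by (auto simp: I_def)
  have f1M: "\<bar>f1 y\<bar> \<le> M" for y using M M0 by (auto simp: f1_def indicator_def)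
  have sub1: "(\<integral>y. f1 y * k n y \<partial>lborel) = (\<integral>s. f1 (x + s / a n) * std_normal_density s \<partial>lborel)" for n
  proof -
    have an: "a n > 0" using a1[of n] by simp
    have "(\<integral>y. f1 y * k n y \<partial>lborel) = \<bar>1 / a n\<bar> *\<^sub>R (\<integral>s. f1 (x + (1 / a n) * s) * k n (x + (1 / a n) * s) \<partial>lborel)"
      using an by (intro lborel_integral_real_affine) auto
    also have "\<dots> = (\<integral>s. f1 (x + s / a n) * std_normal_density s \<partial>lborel)"
      using an by (simp add: k_def mult.left_commute[of _ "a n"])
    finally show ?thesis .
  qed
  have lim1: "(\<lambda>n. \<integral>s. f1 (x + s / a n) * std_normal_density s \<partial>lborel) \<longlonglongrightarrow> (\<integral>s. f x * std_normal_density s \<partial>lborel)"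
  proof (rule integral_dominated_convergence[where w="\<lambda>s. M * std_normal_density s"])
    show "integrable lborel (\<lambda>s. M * std_normal_density s)" using integrable_std_normal by simp
    show "AE s in lborel. norm (f1 (x + s / a n) * std_normal_density s) \<le> M * std_normal_density s" for n
      using f1M by (auto simp: abs_mult normal_density_nonneg intro!: mult_right_mono)
    show "AE s in lborel. (\<lambda>n. f1 (x + s / a n) * std_normal_density s) \<longlonglongrightarrow> f x * std_normal_density s"
    proof (intro AE_I2 tendsto_mult tendsto_const)
      fix s
      have t0: "(\<lambda>n. s / a n) \<longlonglongrightarrow> 0"
        by (intro tendsto_divide_0[OF tendsto_const] filterlim_at_top_imp_at_infinity ainf)
      then have tx: "(\<lambda>n. x + s / a n) \<longlonglongrightarrow> x"
        using tendsto_add[OF tendsto_const t0, of x] by simp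
      have "(\<lambda>n. f (x + s / a n)) \<longlonglongrightarrow> f x"
        using isCont_tendsto_compose[OF isCont_of_cont[OF cont] tx] .
      moreover have "eventually (\<lambda>n. f (x + s / a n) = f1 (x + s / a n)) sequentially"
      proof -
        have "eventually (\<lambda>n. dist (s / a n) 0 < 1) sequentially"
          using t0 by (rule tendstoD) simp
        then show ?thesis
        proof eventually_elim
          case (elim n)
          then have "\<bar>s / a n\<bar> < 1" by (simp only: dist_real_def diff_zero)
          then have "-1 < s / a n \<and> s / a n < 1" by (simp only: abs_less_iff) auto
          then have "x + s / a n \<in> I" unfolding I_def by auto
          then show ?case by (simp add: f1_def)
        qed
      qed
      ultimately show "(\<lambda>n. f1 (x + s / a n)) \<longlonglongrightarrow> f x"
        by (rule Lim_transform_eventually)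
    qed
  qed measurable
  have v1: "(\<integral>s. f x * std_normal_density s \<partial>lborel) = f x"
    using integral_std_normal by simp
  have lim2: "(\<lambda>n. \<integral>y. f2 y * k n y \<partial>lborel) \<longlonglongrightarrow> (\<integral>(y::real). (0::real) \<partial>lborel)"
  proof (rule integral_dominated_convergence[where w="\<lambda>y. 2 * \<bar>f y\<bar>" and f="\<lambda>y. 0::real"])
    show "integrable lborel (\<lambda>y. 2 * \<bar>f y\<bar>)" using int by simp
    show "AE y in lborel. norm (f2 y * k n y) \<le> 2 * \<bar>f y\<bar>" for n
    proof (intro AE_I2)
      fix y
      show "norm (f2 y * k n y) \<le> 2 * \<bar>f y\<bar>"
      proof (cases "y \<in> I")
        case True then show ?thesis by (simp add: f2_def)
      next
        case False
        then have "\<bar>y - x\<bar> > 1" by (auto simp: I_def)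
        then have "k n y \<le> 2" unfolding k_def by (rule snd_bound1[OF a1])
        then show ?thesis using False k0[of n y]
          by (simp add: f2_def abs_mult mult.commute mult_left_mono)
      qed
    qed
    show "AE y in lborel. (\<lambda>n. f2 y * k n y) \<longlonglongrightarrow> 0"
    proof (intro AE_I2)
      fix y
      show "(\<lambda>n. f2 y * k n y) \<longlonglongrightarrow> 0"
      proof (cases "y \<in> I")
        case True then show ?thesis by (simp add: f2_def)
      next
        case False
        then have w: "\<bar>y - x\<bar> > 1" by (auto simp: I_def)
        have "(\<lambda>n. k n y) \<longlonglongrightarrow> 0"
        proof (rule tendsto_sandwich[of "\<lambda>_. 0" _ _ "\<lambda>n. (2 / (y - x)^2) / a n"])
          show "\<forall>\<^sub>F n in sequentially. 0 \<le> k n y" using k0 by simp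
          show "\<forall>\<^sub>F n in sequentially. k n y \<le> (2 / (y - x)^2) / a n"
            using snd_bound[OF a1 w] by (simp add: k_def mult.commute)
          show "(\<lambda>n. (2 / (y - x)^2) / a n) \<longlonglongrightarrow> 0"
            by (intro tendsto_divide_0[OF tendsto_const] filterlim_at_top_imp_at_infinity ainf)
        qed simp
        then show ?thesis using tendsto_mult[OF tendsto_const[of "f2 y"]] by fastforce
      qed
    qed
  qed measurable
  have "(\<lambda>n. \<integral>y. f y * k n y \<partial>lborel) \<longlonglongrightarrow> f x + 0"
    unfolding split sub1 using tendsto_add[OF lim1 lim2] v1 by simp
  then show ?thesis by (simp add: k_def a_def)
qed


theorem fourier_inversion:
  fixes f :: "real \<Rightarrow> real" and x :: real
  assumes cont: "continuous_on UNIV f" and int: "integrable lborel f" and intF: "integrable lborel (FT f)"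
  shows "iFT (FT f) x = complex_of_real (f x)"
proof -
  define a :: "nat \<Rightarrow> real" where "a n = real n + 1" for n
  have a1: "a n \<ge> 1" for n by (simp add: a_def)
  have ainf: "filterlim a at_top sequentially"
    unfolding a_def by (subst add.commute) (intro filterlim_tendsto_add_at_top[OF tendsto_const] filterlim_real_sequentially)
  have [measurable]: "f \<in> borel_measurable borel" using cont by (rule cont_borel)
  have [measurable]: "FT f \<in> borel_measurable borel" using intF by (simp add: borel_measurable_integrable)
  define e where "e n u = exp (-((u / a n)^2)/2)" for n u
  have [measurable]: "e n \<in> borel_measurable borel" for n unfolding e_def by measurable
  have e_le: "e n u \<le> 1" for n u unfolding e_def by simp
  have e_int: "integrable lborel (e n)" for n
    unfolding e_def using a1[of n] by (intro integrable_gauss) auto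
  define J where "J n = (\<integral>u. iexp (-(u*x)) * complex_of_real (e n u) * FT f u \<partial>lborel)" for n
  have limJ: "J \<longlonglongrightarrow> (\<integral>u. iexp (-(u*x)) * FT f u \<partial>lborel)"
    unfolding J_def
  proof (rule integral_dominated_convergence[where w="\<lambda>u. norm (FT f u)"])
    show "integrable lborel (\<lambda>u. norm (FT f u))" using intF by simp
    show "AE u in lborel. norm (iexp (-(u*x)) * complex_of_real (e n u) * FT f u) \<le> norm (FT f u)" for n
      using e_le by (intro AE_I2) (simp add: norm_mult e_def mult_left_le_one_le)
    show "AE u in lborel. (\<lambda>n. iexp (-(u*x)) * complex_of_real (e n u) * FT f u) \<longlonglongrightarrow> iexp (-(u*x)) * FT f u"
    proof (intro AE_I2)
      fix u
      have "(\<lambda>n. u / a n) \<longlonglongrightarrow> 0"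
        by (intro tendsto_divide_0[OF tendsto_const] filterlim_at_top_imp_at_infinity ainf)
      then have "(\<lambda>n. e n u) \<longlonglongrightarrow> exp (-((0::real)^2)/2)"
        unfolding e_def by (intro tendsto_intros) auto
      then have "(\<lambda>n. complex_of_real (e n u)) \<longlonglongrightarrow> complex_of_real 1" by (intro tendsto_of_real) simp
      then have "(\<lambda>n. complex_of_real (e n u)) \<longlonglongrightarrow> 1" by simp
      then show "(\<lambda>n. iexp (-(u*x)) * complex_of_real (e n u) * FT f u) \<longlonglongrightarrow> iexp (-(u*x)) * FT f u"
        using tendsto_mult[OF tendsto_mult[OF tendsto_const[of "iexp (-(u*x))"]] tendsto_const[of "FT f u"]] by fastforce
    qed
  qed measurable
  have Jeq: "J n = complex_of_real (2*pi) * complex_of_real (\<integral>y. f y * (a n * std_normal_density (a n * (y - x))) \<partial>lborel)" for n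
  proof -
    define F where "F u y = iexp (-(u*x)) * complex_of_real (e n u) * (iexp (u*y) * complex_of_real (f y))" for u y
    have Fint: "integrable (lborel \<Otimes>\<^sub>M lborel) (\<lambda>(u,y). F u y)"
    proof (rule lborel_pair.Fubini_integrable)
      show "(\<lambda>(u,y). F u y) \<in> borel_measurable (lborel \<Otimes>\<^sub>M lborel)" unfolding F_def by measurable
      have "(\<integral>y. norm (F u y) \<partial>lborel) = e n u * (\<integral>y. \<bar>f y\<bar> \<partial>lborel)" for u
        by (simp add: F_def norm_mult e_def)
      then show "integrable lborel (\<lambda>u. \<integral>y. norm ((\<lambda>(u,y). F u y) (u, y)) \<partial>lborel)"
        using e_int[of n] by simp
      show "AE u in lborel. integrable lborel (\<lambda>y. (\<lambda>(u,y). F u y) (u, y))"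
      proof (intro AE_I2)
        fix u
        show "integrable lborel (\<lambda>y. (\<lambda>(u,y). F u y) (u, y))"
          unfolding F_def split
          by (intro integrable_mult_right Bochner_Integration.integrable_bound[OF int]) (auto simp: norm_mult)
      qed
    qed
    have 1: "(\<integral>u. (\<integral>y. F u y \<partial>lborel) \<partial>lborel) = J n"
      unfolding J_def F_def FT_def by (simp add: mult.assoc)
    have 2: "(\<integral>y. (\<integral>u. F u y \<partial>lborel) \<partial>lborel)
        = (\<integral>y. complex_of_real (f y) * complex_of_real (a n * sqrt (2*pi) * exp (-((a n * (y - x))^2)/2)) \<partial>lborel)"
    proof (intro Bochner_Integration.integral_cong refl)
      fix y
      have "(\<integral>u. F u y \<partial>lborel) = (\<integral>u. complex_of_real (f y) * (iexp (u * (y - x)) * complex_of_real (exp (-((u / a n)^2)/2))) \<partial>lborel)"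
      proof (intro Bochner_Integration.integral_cong refl)
        fix u
        have X: "F u y = complex_of_real (f y) * ((iexp (-(u*x)) * iexp (u*y)) * complex_of_real (e n u))"
          by (simp add: F_def mult_ac)
        have Y: "iexp (-(u*x)) * iexp (u*y) = iexp (u*(y-x))"
          by (subst iexp_add[symmetric]) (simp add: algebra_simps)
        show "F u y = complex_of_real (f y) * (iexp (u * (y - x)) * complex_of_real (exp (-((u / a n)^2)/2)))"
          unfolding X Y e_def ..
      qed
      also have "\<dots> = complex_of_real (f y) * complex_of_real (a n * sqrt (2*pi) * exp (-((a n * (y - x))^2)/2))"
        using gauss_ft[of "a n" "y - x"] a1[of n] by simp
      finally show "(\<integral>u. F u y \<partial>lborel) = complex_of_real (f y) * complex_of_real (a n * sqrt (2*pi) * exp (-((a n * (y - x))^2)/2))" .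
    qed
    have 3: "a n * sqrt (2*pi) * exp (-((a n * (y - x))^2)/2) = 2*pi * (a n * std_normal_density (a n * (y - x)))" for y
    proof -
      have "sqrt (2*pi) * sqrt (2*pi) = 2*pi" by simp
      then show ?thesis unfolding std_normal_density_def
        by (simp add: field_simps)
    qed
    have "J n = (\<integral>y. (\<integral>u. F u y \<partial>lborel) \<partial>lborel)"
      using 1 lborel_pair.Fubini_integral[OF Fint] by simp
    also have "\<dots> = (\<integral>y. complex_of_real (2*pi) * complex_of_real (f y * (a n * std_normal_density (a n * (y - x)))) \<partial>lborel)"
      unfolding 2 3 by (simp add: mult_ac)
    also have "\<dots> = complex_of_real (2*pi) * complex_of_real (\<integral>y. f y * (a n * std_normal_density (a n * (y - x))) \<partial>lborel)"
      by (simp only: integral_mult_right_zero integral_complex_of_real)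
    finally show ?thesis .
  qed
  have "(\<lambda>n. complex_of_real (1/(2*pi)) * J n) \<longlonglongrightarrow> complex_of_real (1/(2*pi)) * (\<integral>u. iexp (-(u*x)) * FT f u \<partial>lborel)"
    by (intro tendsto_mult tendsto_const limJ)
  moreover have "(\<lambda>n. complex_of_real (1/(2*pi)) * J n) \<longlonglongrightarrow> complex_of_real (f x)"
  proof -
    have "complex_of_real (1/(2*pi)) * J n = complex_of_real (\<integral>y. f y * ((real n + 1) * std_normal_density ((real n + 1) * (y - x))) \<partial>lborel)" for n
      unfolding Jeq a_def by (simp only: of_real_mult[symmetric]) (simp add: pi_neq_zero)
    then show ?thesis using tendsto_of_real[OF approx_id[OF cont int, of x]] by simp
  qed
  ultimately show ?thesis unfolding iFT_def by (rule LIMSEQ_unique)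
qed


lemma conv_ft:
  fixes f :: "real \<Rightarrow> real" and \<rho> :: "real measure" and x :: real
  assumes fin: "finite_measure \<rho>" and sets: "sets \<rho> = sets borel"
    and cont: "continuous_on UNIV f" and int: "integrable lborel f" and intF: "integrable lborel (FT f)"
  shows "complex_of_real (1/(2*pi)) * (\<integral>u. iexp (-(u*x)) * char \<rho> u * FT f u \<partial>lborel)
       = (\<integral>y. complex_of_real (f (x - y)) \<partial>\<rho>)"
proof -
  interpret finite_measure \<rho> by (rule fin)
  interpret P: pair_sigma_finite lborel \<rho> ..
  note sets[measurable_cong]
  have [measurable]: "f \<in> borel_measurable borel" using cont by (rule cont_borel)
  have [measurable]: "FT f \<in> borel_measurable borel" using intF by (simp add: borel_measurable_integrable)
  define F where "F u y = iexp (-(u*x)) * FT f u * iexp (u*y)" for u y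
  have Fint: "integrable (lborel \<Otimes>\<^sub>M \<rho>) (\<lambda>(u,y). F u y)"
  proof (rule P.Fubini_integrable)
    show "(\<lambda>(u,y). F u y) \<in> borel_measurable (lborel \<Otimes>\<^sub>M \<rho>)" unfolding F_def by measurable
    have "(\<integral>y. norm (F u y) \<partial>\<rho>) = norm (FT f u) * measure \<rho> (space \<rho>)" for u
      by (simp add: F_def norm_mult)
    then show "integrable lborel (\<lambda>u. \<integral>y. norm ((\<lambda>(u,y). F u y) (u, y)) \<partial>\<rho>)"
      using intF by simp
    show "AE u in lborel. integrable \<rho> (\<lambda>y. (\<lambda>(u,y). F u y) (u, y))"
    proof (intro AE_I2)
      fix u
      show "integrable \<rho> (\<lambda>y. (\<lambda>(u,y). F u y) (u, y))"
        unfolding F_def split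
        by (intro integrable_const_bound[where B="norm (FT f u)"]) (auto simp: norm_mult)
    qed
  qed
  have 1: "(\<integral>u. (\<integral>y. F u y \<partial>\<rho>) \<partial>lborel) = (\<integral>u. iexp (-(u*x)) * char \<rho> u * FT f u \<partial>lborel)"
    unfolding F_def char_def by (simp add: mult_ac)
  have 2: "(\<integral>u. F u y \<partial>lborel) = complex_of_real (2*pi) * complex_of_real (f (x - y))" for y
  proof -
    have "(\<integral>u. F u y \<partial>lborel) = (\<integral>u. iexp (-(u*(x - y))) * FT f u \<partial>lborel)"
    proof (intro Bochner_Integration.integral_cong refl)
      fix u
      have Y: "iexp (-(u*x)) * iexp (u*y) = iexp (-(u*(x-y)))"
        by (subst iexp_add[symmetric]) (simp add: algebra_simps)
      have X: "F u y = (iexp (-(u*x)) * iexp (u*y)) * FT f u"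
        by (simp add: F_def mult_ac)
      show "F u y = iexp (-(u*(x - y))) * FT f u" unfolding X Y ..
    qed
    also have "\<dots> = complex_of_real (2*pi) * iFT (FT f) (x - y)"
      unfolding iFT_def by (simp add: pi_neq_zero)
    also have "\<dots> = complex_of_real (2*pi) * complex_of_real (f (x - y))"
      using fourier_inversion[OF cont int intF] by simp
    finally show ?thesis .
  qed
  have "(\<integral>u. iexp (-(u*x)) * char \<rho> u * FT f u \<partial>lborel) = (\<integral>y. (\<integral>u. F u y \<partial>lborel) \<partial>\<rho>)"
    using 1 P.Fubini_integral[OF Fint] by simp
  also have "\<dots> = complex_of_real (2*pi) * (\<integral>y. complex_of_real (f (x - y)) \<partial>\<rho>)"
    unfolding 2 by (simp only: integral_mult_right_zero)
  finally show ?thesis by (simp add: pi_neq_zero)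
qed


lemma char_convolution:
  assumes fM: "finite_measure M" and fN: "finite_measure N"
    and sM: "sets M = sets borel" and sN: "sets N = sets borel"
  shows "char (convolution M N) u = char M u * char N u"
proof -
  interpret M: finite_measure M by (rule fM)
  interpret N: finite_measure N by (rule fN)
  interpret P: pair_sigma_finite M N ..
  note sM[measurable_cong] sN[measurable_cong]
  have fP: "finite_measure (M \<Otimes>\<^sub>M N)" by (rule finite_measure_pair_measure[OF fN fM])
  have int: "integrable (M \<Otimes>\<^sub>M N) (\<lambda>(x,y). iexp (u*x) * iexp (u*y))"
    by (intro finite_measure.integrable_const_bound[OF fP, where B=1]) (auto simp: norm_mult)
  have "char (convolution M N) u = (\<integral>z. iexp (u * z) \<partial>distr (M \<Otimes>\<^sub>M N) borel (\<lambda>(x,y). x + y))"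
    unfolding char_def convolution_def ..
  also have "\<dots> = (\<integral>p. iexp (u * (case p of (x,y) \<Rightarrow> x + y)) \<partial>(M \<Otimes>\<^sub>M N))"
    by (rule integral_distr) measurable
  also have "\<dots> = (\<integral>p. (\<lambda>(x,y). iexp (u*x) * iexp (u*y)) p \<partial>(M \<Otimes>\<^sub>M N))"
    by (intro Bochner_Integration.integral_cong refl) (auto simp: iexp_add[symmetric] distrib_left exp_add)
  also have "\<dots> = (\<integral>x. (\<integral>y. iexp (u*x) * iexp (u*y) \<partial>N) \<partial>M)"
    using P.integral_fst[OF int] by simp
  also have "\<dots> = char M u * char N u"
    unfolding char_def by simp
  finally show ?thesis .
qed

lemma measure_convolution:
  assumes fM: "finite_measure M" and fN: "finite_measure N"
    and sM: "sets M = sets borel" and sN: "sets N = sets borel"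
  shows "measure (convolution M N) UNIV = measure M UNIV * measure N UNIV"
proof -
  interpret M: finite_measure M by (rule fM)
  interpret N: finite_measure N by (rule fN)
  interpret P: pair_sigma_finite M N ..
  note sM[measurable_cong] sN[measurable_cong]
  have spM: "space M = UNIV" using sets_eq_imp_space_eq[OF sM] by simp
  have spN: "space N = UNIV" using sets_eq_imp_space_eq[OF sN] by simp
  have "emeasure (convolution M N) UNIV = emeasure (M \<Otimes>\<^sub>M N) (space M \<times> space N)"
    unfolding convolution_def by (subst emeasure_distr) (auto simp: space_pair_measure spM spN)
  also have "\<dots> = emeasure M (space M) * emeasure N (space N)"
    by (rule N.emeasure_pair_measure_Times) auto
  finally have "emeasure (convolution M N) UNIV = ennreal (measure M UNIV * measure N UNIV)"
    by (simp add: M.emeasure_eq_measure N.emeasure_eq_measure spM spN ennreal_mult)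
  then show ?thesis by (simp add: measure_def)
qed

lemma conv_pow_props:
  assumes f: "finite_measure N" and s: "sets N = sets borel"
  shows "finite_measure (conv_pow N k) \<and> sets (conv_pow N k) = sets borel
       \<and> measure (conv_pow N k) UNIV = measure N UNIV ^ k
       \<and> (\<forall>u. char (conv_pow N k) u = char N u ^ k)"
proof (induction k)
  case 0
  have "finite_measure (return borel (0::real))" proof -
    interpret prob_space "return borel (0::real)" by (rule prob_space_return) simp
    show ?thesis by unfold_locales
  qed
  moreover have "char (return borel (0::real)) u = 1" for u
    unfolding char_def by (subst integral_return) auto
  ultimately show ?case by (simp add: measure_return)
next
  case (Suc k)
  then have IH: "finite_measure (conv_pow N k)" "sets (conv_pow N k) = sets borel"
    "measure (conv_pow N k) UNIV = measure N UNIV ^ k" "\<And>u. char (conv_pow N k) u = char N u ^ k" by auto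
  show ?case using IH f s
    by (simp add: convolution_finite char_convolution measure_convolution)
qed

lemma refl_meas_props:
  assumes f: "finite_measure \<nu>" and s: "sets \<nu> = sets borel"
  shows "finite_measure (refl_meas \<nu>) \<and> sets (refl_meas \<nu>) = sets borel
       \<and> measure (refl_meas \<nu>) UNIV = measure \<nu> UNIV
       \<and> (\<forall>u. char (refl_meas \<nu>) u = char \<nu> (- u))"
proof -
  interpret finite_measure \<nu> by (rule f)
  note s[measurable_cong]
  have sp: "space \<nu> = UNIV" using sets_eq_imp_space_eq[OF s] by simp
  have "finite_measure (refl_meas \<nu>)" unfolding refl_meas_def by (rule finite_measure_distr) measurable
  moreover have "measure (refl_meas \<nu>) UNIV = measure \<nu> UNIV"
    unfolding refl_meas_def by (subst measure_distr) (auto simp: sp)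
  moreover have "char (refl_meas \<nu>) u = char \<nu> (- u)" for u
    unfolding refl_meas_def char_def by (subst integral_distr) auto
  ultimately show ?thesis by (simp add: refl_meas_def)
qed


lemma Kh_props:
  fixes K :: "real \<Rightarrow> real" and h :: real
  assumes h: "h > 0" and int: "integrable lborel K" and intF: "integrable lborel (FT K)"
    and cont: "continuous_on UNIV K"
  shows "continuous_on UNIV (Kh K h)" "integrable lborel (Kh K h)"
    "\<And>u. FT (Kh K h) u = FT K (h * u)" "integrable lborel (FT (Kh K h))"
proof -
  have "continuous_on UNIV (\<lambda>x. K (x / h) / h)"
    by (intro continuous_on_divide continuous_on_const continuous_on_compose2[OF cont]) (use h in \<open>auto intro!: continuous_intros\<close>)
  then show "continuous_on UNIV (Kh K h)" unfolding Kh_def by simp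
  have "integrable lborel (\<lambda>x. K (0 + (1/h) * x))" using h by (intro lborel_integrable_real_affine int) auto
  then have "integrable lborel (\<lambda>x. K (x / h) / h)" by simp
  then show "integrable lborel (Kh K h)" unfolding Kh_def by simp
  show ft: "FT (Kh K h) u = FT K (h * u)" for u
  proof -
    have "FT (Kh K h) u = \<bar>h\<bar> *\<^sub>R (\<integral>s. iexp (u * (0 + h * s)) * complex_of_real (Kh K h (0 + h * s)) \<partial>lborel)"
      unfolding FT_def using h by (intro lborel_integral_real_affine) auto
    also have "\<dots> = FT K (h * u)"
      unfolding FT_def Kh_def using h by (simp add: scaleR_conv_of_real mult_ac)
    finally show ?thesis .
  qed
  have "integrable lborel (\<lambda>u. FT K (0 + h * u))" using h by (intro lborel_integrable_real_affine intF) auto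
  moreover have "FT (Kh K h) = (\<lambda>u. FT K (h * u))" by (rule ext) (rule ft)
  ultimately show "integrable lborel (FT (Kh K h))" by simp
qed

lemma inv_phi:
  "inverse (phi \<Delta> \<gamma> lam \<nu> (-u)) = complex_of_real (exp (lam*\<Delta>)) * iexp (\<gamma>*\<Delta>*u) * exp (- (complex_of_real \<Delta> * char \<nu> (-u)))"
proof -
  have "inverse (phi \<Delta> \<gamma> lam \<nu> (-u)) = exp (complex_of_real (lam*\<Delta>) + \<i> * complex_of_real (\<gamma>*\<Delta>*u) + (- (complex_of_real \<Delta> * char \<nu> (-u))))"
    unfolding phi_def by (simp add: exp_minus[symmetric] algebra_simps)
  also have "\<dots> = complex_of_real (exp (lam*\<Delta>)) * iexp (\<gamma>*\<Delta>*u) * exp (- (complex_of_real \<Delta> * char \<nu> (-u)))"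
    by (simp only: exp_add exp_of_real)
  finally show ?thesis .
qed


lemma char_meas:
  assumes f: "finite_measure M" and s: "sets M = sets borel"
  shows "char M \<in> borel_measurable borel"
proof -
  interpret finite_measure M by (rule f)
  note s[measurable_cong]
  have "(\<lambda>u. \<integral>y. iexp (u * y) \<partial>M) \<in> borel_measurable borel"
    by (rule borel_measurable_lebesgue_integral) measurable
  then show ?thesis unfolding char_def .
qed

lemma char_bound:
  assumes f: "finite_measure M" and s: "sets M = sets borel"
  shows "norm (char M u) \<le> measure M UNIV"
proof -
  interpret finite_measure M by (rule f)
  have sp: "space M = UNIV" using sets_eq_imp_space_eq[OF s] by simp
  have "norm (char M u) \<le> (\<integral>y. norm (iexp (u * y)) \<partial>M)"
    unfolding char_def by (rule integral_norm_bound)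
  also have "\<dots> = measure M UNIV" by (simp add: sp)
  finally show ?thesis .
qed

lemma exp_series_char:
  fixes C :: complex
  shows "(\<lambda>k. complex_of_real ((- \<Delta>) ^ k / fact k) * C ^ k) sums exp (- (complex_of_real \<Delta> * C))"
proof -
  have "(\<lambda>k. (- (complex_of_real \<Delta> * C)) ^ k /\<^sub>R fact k) sums exp (- (complex_of_real \<Delta> * C))"
    by (rule exp_converges)
  moreover have "(- (complex_of_real \<Delta> * C)) ^ k /\<^sub>R fact k = complex_of_real ((- \<Delta>) ^ k / fact k) * C ^ k" for k
    by (simp add: scaleR_conv_of_real power_mult_distrib power_minus' field_simps)
  ultimately show ?thesis by simp
qed


lemma part1:
  fixes f :: "real \<Rightarrow> real" and \<nu> :: "real measure"
  assumes fin: "finite_measure \<nu>" and sets: "sets \<nu> = sets borel" and lam: "measure \<nu> UNIV = lam"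
    and cont: "continuous_on UNIV f" and int: "integrable lborel f" and intF: "integrable lborel (FT f)"
  shows "iFT (\<lambda>u. inverse (phi \<Delta> \<gamma> lam \<nu> (- u)) * FT f u) x
       = conv_inv_meas (\<lambda>y. complex_of_real (f y)) \<Delta> \<gamma> lam \<nu> x"
proof -
  define N where "N = refl_meas \<nu>"
  define P where "P k = conv_pow N k" for k
  have N: "finite_measure N" "sets N = sets borel" "measure N UNIV = lam" "\<And>u. char N u = char \<nu> (-u)"
    using refl_meas_props[OF fin sets] lam unfolding N_def by auto
  have Pf: "finite_measure (P k)" and Ps: "sets (P k) = sets borel" and Pm: "measure (P k) UNIV = lam ^ k"
    and Pc: "char (P k) u = char N u ^ k" for k u
    using conv_pow_props[OF N(1,2), of k] N(3) unfolding P_def by auto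
  have [measurable]: "char (P k) \<in> borel_measurable borel" for k by (rule char_meas[OF Pf Ps])
  have [measurable]: "FT f \<in> borel_measurable borel" using intF by (simp add: borel_measurable_integrable)
  have lam0: "lam \<ge> 0" using lam by auto
  define E where "E = exp (lam * \<Delta>)"
  define c where "c k = (- \<Delta>) ^ k / fact k" for k
  define t where "t k u = iexp (-(u*x)) * (complex_of_real E * iexp (\<gamma>*\<Delta>*u) * (complex_of_real (c k) * char (P k) u)) * FT f u" for k u
  define b where "b k = (\<bar>\<Delta>\<bar> * lam) ^ k / fact k" for k
  have b0: "b k \<ge> 0" for k unfolding b_def using lam0 by simp
  have bsum: "summable b"
    using summable_exp[of "\<bar>\<Delta>\<bar> * lam"] unfolding b_def by (simp add: divide_inverse mult.commute)
  have bs2: "summable (\<lambda>k. E * b k * C)" for C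
    using summable_mult2[OF summable_mult[OF bsum, of E], of C] .
  have tsum: "(\<lambda>k. t k u) sums (iexp (-(u*x)) * (inverse (phi \<Delta> \<gamma> lam \<nu> (-u)) * FT f u))" for u
  proof -
    have "(\<lambda>k. complex_of_real (c k) * char (P k) u) sums exp (- (complex_of_real \<Delta> * char \<nu> (-u)))"
      using exp_series_char[of \<Delta> "char N u"] unfolding c_def Pc N(4) .
    then have "(\<lambda>k. iexp (-(u*x)) * (complex_of_real E * iexp (\<gamma>*\<Delta>*u) * (complex_of_real (c k) * char (P k) u)) * FT f u)
       sums (iexp (-(u*x)) * (complex_of_real E * iexp (\<gamma>*\<Delta>*u) * exp (- (complex_of_real \<Delta> * char \<nu> (-u)))) * FT f u)"
      by (intro sums_mult sums_mult2)
    then show ?thesis unfolding t_def inv_phi E_def by (simp add: mult_ac)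
  qed
  have tnorm: "norm (t k u) \<le> E * b k * norm (FT f u)" for k u
  proof -
    have "norm (char (P k) u) \<le> lam ^ k" using char_bound[OF Pf Ps, of k u] Pm by simp
    then have "\<bar>c k\<bar> * norm (char (P k) u) \<le> \<bar>c k\<bar> * lam ^ k" by (intro mult_left_mono) auto
    also have "\<bar>c k\<bar> * lam ^ k = b k" unfolding c_def b_def by (simp add: power_abs power_mult_distrib)
    finally have "\<bar>c k\<bar> * norm (char (P k) u) \<le> b k" .
    then have "E * (\<bar>c k\<bar> * norm (char (P k) u)) * norm (FT f u) \<le> E * b k * norm (FT f u)"
      unfolding E_def by (intro mult_right_mono mult_left_mono) auto
    then show ?thesis unfolding t_def E_def by (simp add: norm_mult mult_ac)
  qed
  have tmeas[measurable]: "t k \<in> borel_measurable borel" for k unfolding t_def by measurable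
  have tint: "integrable lborel (t k)" for k
  proof (rule Bochner_Integration.integrable_bound)
    show "integrable lborel (\<lambda>u. E * b k * norm (FT f u))" using intF by simp
    show "AE u in lborel. norm (t k u) \<le> norm (E * b k * norm (FT f u))"
      using tnorm b0 by (intro AE_I2) (simp add: E_def)
  qed measurable
  have intt_le: "(\<integral>u. norm (t k u) \<partial>lborel) \<le> E * b k * (\<integral>u. norm (FT f u) \<partial>lborel)" for k
  proof -
    have "(\<integral>u. norm (t k u) \<partial>lborel) \<le> (\<integral>u. E * b k * norm (FT f u) \<partial>lborel)"
      using tint intF tnorm by (intro integral_mono) auto
    then show ?thesis by simp
  qed
  have S: "(\<lambda>k. integral\<^sup>L lborel (t k)) sums (\<integral>u. (\<Sum>k. t k u) \<partial>lborel)"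
  proof (rule sums_integral)
    show "integrable lborel (t k)" for k by (rule tint)
    show "AE u in lborel. summable (\<lambda>k. norm (t k u))"
    proof (intro AE_I2)
      fix u
      show "summable (\<lambda>k. norm (t k u))"
        by (rule summable_comparison_test'[OF bs2[of "norm (FT f u)"], of 0])
          (use tnorm in simp)
    qed
    show "summable (\<lambda>k. \<integral>u. norm (t k u) \<partial>lborel)"
      by (rule summable_comparison_test'[OF bs2[of "\<integral>u. norm (FT f u) \<partial>lborel"], of 0])
          (use intt_le in simp)
  qed
  have Seq: "(\<integral>u. (\<Sum>k. t k u) \<partial>lborel) = (\<integral>u. iexp (-(u*x)) * (inverse (phi \<Delta> \<gamma> lam \<nu> (-u)) * FT f u) \<partial>lborel)"
    using tsum by (intro Bochner_Integration.integral_cong refl) (simp add: sums_iff)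
  define I where "I k = (\<integral>y. complex_of_real (f (x - \<gamma> * \<Delta> - y)) \<partial>P k)" for k
  have tk: "complex_of_real (1/(2*pi)) * integral\<^sup>L lborel (t k) = complex_of_real E * (complex_of_real (c k) * I k)" for k
  proof -
    have "integral\<^sup>L lborel (t k) = (\<integral>u. (complex_of_real E * complex_of_real (c k)) * (iexp (-(u*(x - \<gamma>*\<Delta>))) * char (P k) u * FT f u) \<partial>lborel)"
    proof (intro Bochner_Integration.integral_cong refl)
      fix u
      have Y: "iexp (-(u*x)) * iexp (\<gamma>*\<Delta>*u) = iexp (-(u*(x - \<gamma>*\<Delta>)))"
        by (subst iexp_add[symmetric]) (simp add: algebra_simps)
      have X: "t k u = (complex_of_real E * complex_of_real (c k)) * ((iexp (-(u*x)) * iexp (\<gamma>*\<Delta>*u)) * char (P k) u * FT f u)"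
        unfolding t_def by (simp add: mult_ac)
      show "t k u = (complex_of_real E * complex_of_real (c k)) * (iexp (-(u*(x - \<gamma>*\<Delta>))) * char (P k) u * FT f u)"
        unfolding X Y ..
    qed
    also have "\<dots> = (complex_of_real E * complex_of_real (c k)) * (\<integral>u. iexp (-(u*(x - \<gamma>*\<Delta>))) * char (P k) u * FT f u \<partial>lborel)"
      by (rule integral_mult_right_zero)
    finally have "complex_of_real (1/(2*pi)) * integral\<^sup>L lborel (t k) = (complex_of_real E * complex_of_real (c k)) *
        (complex_of_real (1/(2*pi)) * (\<integral>u. iexp (-(u*(x - \<gamma>*\<Delta>))) * char (P k) u * FT f u \<partial>lborel))"
      by (simp add: mult_ac)
    also have "\<dots> = (complex_of_real E * complex_of_real (c k)) * I k"
      unfolding I_def by (subst conv_ft[OF Pf Ps cont int intF]) simp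
    finally show ?thesis by (simp add: mult_ac)
  qed
  have "(\<lambda>k. complex_of_real (1/(2*pi)) * integral\<^sup>L lborel (t k)) sums
      (complex_of_real (1/(2*pi)) * (\<integral>u. iexp (-(u*x)) * (inverse (phi \<Delta> \<gamma> lam \<nu> (-u)) * FT f u) \<partial>lborel))"
    using sums_mult[OF S, of "complex_of_real (1/(2*pi))"] unfolding Seq .
  then have "(\<lambda>k. complex_of_real E * (complex_of_real (c k) * I k)) sums iFT (\<lambda>u. inverse (phi \<Delta> \<gamma> lam \<nu> (- u)) * FT f u) x"
    unfolding tk iFT_def .
  then have "(\<lambda>k. complex_of_real E * (complex_of_real (c k) * I k) / complex_of_real E) sums
      (iFT (\<lambda>u. inverse (phi \<Delta> \<gamma> lam \<nu> (- u)) * FT f u) x / complex_of_real E)"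
    by (rule sums_divide)
  moreover have "E \<noteq> 0" unfolding E_def by simp
  ultimately have "(\<lambda>k. complex_of_real (c k) * I k) sums (iFT (\<lambda>u. inverse (phi \<Delta> \<gamma> lam \<nu> (- u)) * FT f u) x / complex_of_real E)"
    by simp
  then have "conv_inv_meas (\<lambda>y. complex_of_real (f y)) \<Delta> \<gamma> lam \<nu> x
      = complex_of_real E * (iFT (\<lambda>u. inverse (phi \<Delta> \<gamma> lam \<nu> (- u)) * FT f u) x / complex_of_real E)"
    unfolding conv_inv_meas_def E_def[symmetric] c_def[symmetric] I_def[symmetric] P_def[symmetric] N_def[symmetric]
    by (simp add: sums_iff)
  then show ?thesis using \<open>E \<noteq> 0\<close> by simp
qed


lemma FT_meas[measurable]: "f \<in> borel_measurable borel \<Longrightarrow> FT f \<in> borel_measurable borel"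
proof -
  assume [measurable]: "f \<in> borel_measurable borel"
  have "(\<lambda>u. \<integral>x. iexp (u * x) * complex_of_real (f x) \<partial>lborel) \<in> borel_measurable borel"
    by (rule lborel.borel_measurable_lebesgue_integral) measurable
  then show ?thesis unfolding FT_def .
qed

lemma FT_bound: "norm (FT f u) \<le> (\<integral>x. \<bar>f x\<bar> \<partial>lborel)"
proof -
  have "norm (FT f u) \<le> (\<integral>x. norm (iexp (u * x) * complex_of_real (f x)) \<partial>lborel)"
    unfolding FT_def by (rule integral_norm_bound)
  then show ?thesis by (simp add: norm_mult)
qed

lemma snd_affine:
  fixes c t :: real assumes c: "c \<noteq> 0"
  shows "integrable lborel (\<lambda>z. std_normal_density (t + c * z))"
    "(\<integral>z. std_normal_density (t + c * z) \<partial>lborel) = 1 / \<bar>c\<bar>"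
proof -
  show "integrable lborel (\<lambda>z. std_normal_density (t + c * z))"
    using c by (intro lborel_integrable_real_affine integrable_std_normal)
  have "(\<integral>z. std_normal_density z \<partial>lborel) = \<bar>c\<bar> *\<^sub>R (\<integral>z. std_normal_density (t + c * z) \<partial>lborel)"
    using c by (rule lborel_integral_real_affine)
  then show "(\<integral>z. std_normal_density (t + c * z) \<partial>lborel) = 1 / \<bar>c\<bar>"
    using c integral_std_normal by (simp add: field_simps)
qed

lemma kern_int:
  fixes a y :: real assumes a: "a > 0"
  shows "integrable lborel (\<lambda>z. a * std_normal_density (a * (y - z)))"
    "(\<integral>z. a * std_normal_density (a * (y - z)) \<partial>lborel) = 1"
    "integrable lborel (\<lambda>z. a * std_normal_density (a * (z - y)))"
    "(\<integral>z. a * std_normal_density (a * (z - y)) \<partial>lborel) = 1"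
proof -
  have e1: "a * (y - z) = a * y + (- a) * z" for z by (simp add: algebra_simps)
  have e2: "a * (z - y) = (- (a * y)) + a * z" for z by (simp add: algebra_simps)
  show "integrable lborel (\<lambda>z. a * std_normal_density (a * (y - z)))"
    unfolding e1 using snd_affine(1)[of "-a" "a*y"] a by simp
  show "(\<integral>z. a * std_normal_density (a * (y - z)) \<partial>lborel) = 1"
    unfolding e1 using snd_affine(2)[of "-a" "a*y"] a by simp
  show "integrable lborel (\<lambda>z. a * std_normal_density (a * (z - y)))"
    unfolding e2 using snd_affine(1)[of "a" "-(a*y)"] a by simp
  show "(\<integral>z. a * std_normal_density (a * (z - y)) \<partial>lborel) = 1"
    unfolding e2 using snd_affine(2)[of "a" "-(a*y)"] a by simp
qed


lemma amgm: fixes x y :: real shows "\<bar>x * y\<bar> \<le> x^2 / 2 + y^2 / 2"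
proof -
  have "0 \<le> (\<bar>x\<bar> - \<bar>y\<bar>)^2" by simp
  also have "\<dots> = x^2 + y^2 - 2 * \<bar>x * y\<bar>" by (simp add: power2_diff abs_mult)
  finally show ?thesis by simp
qed

lemma l2_conv_bound:
  fixes \<phi> :: "real \<Rightarrow> real" and a :: real
  assumes a: "a > 0" and m[measurable]: "\<phi> \<in> borel_measurable borel" and int: "integrable lborel \<phi>"
    and int2: "integrable lborel (\<lambda>x. (\<phi> x)^2)"
  shows "integrable lborel (\<lambda>y. \<phi> y * (\<integral>z. \<phi> z * (a * std_normal_density (a * (y - z))) \<partial>lborel))"
    "(\<integral>y. \<phi> y * (\<integral>z. \<phi> z * (a * std_normal_density (a * (y - z))) \<partial>lborel) \<partial>lborel) \<le> (\<integral>y. (\<phi> y)^2 \<partial>lborel)"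
proof -
  define k where "k y z = a * std_normal_density (a * (y - z))" for y z
  have k0: "k y z \<ge> 0" for y z unfolding k_def using a by (simp add: normal_density_nonneg)
  have kle: "k y z \<le> a" for y z
  proof -
    have "std_normal_density (a * (y - z)) \<le> 1"
      unfolding std_normal_density_def using pi_gt3
      by (intro mult_le_one) (auto simp: divide_simps)
    then show ?thesis unfolding k_def using a by (simp add: mult_left_le)
  qed
  have [measurable]: "(\<lambda>(y,z). k y z) \<in> borel_measurable (lborel \<Otimes>\<^sub>M lborel)" unfolding k_def by measurable
  have kz: "integrable lborel (\<lambda>z. k y z)" "(\<integral>z. k y z \<partial>lborel) = 1" for y
    unfolding k_def using kern_int(1,2)[OF a, of y] by auto
  have ky: "integrable lborel (\<lambda>y. k y z)" "(\<integral>y. k y z \<partial>lborel) = 1" for z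
    unfolding k_def using kern_int(3,4)[OF a, of z] by auto
  have intz1: "integrable lborel (\<lambda>z. \<phi> z * k y z)" for y
  proof (rule Bochner_Integration.integrable_bound)
    show "integrable lborel (\<lambda>z. a * \<phi> z)" using int by simp
    show "AE z in lborel. norm (\<phi> z * k y z) \<le> norm (a * \<phi> z)"
      using a by (intro AE_I2) (simp add: abs_mult k0 mult.commute[of a] mult_left_mono[OF kle])
  qed (simp add: k_def)
  have intz2: "integrable lborel (\<lambda>z. (\<phi> z)^2 * k y z)" for y
  proof (rule Bochner_Integration.integrable_bound)
    show "integrable lborel (\<lambda>z. a * (\<phi> z)^2)" using int2 by simp
    show "AE z in lborel. norm ((\<phi> z)^2 * k y z) \<le> norm (a * (\<phi> z)^2)"
      using a by (intro AE_I2) (simp add: abs_mult k0 mult.commute[of a] mult_left_mono[OF kle])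
  qed (simp add: k_def)
  define H where "H = (\<lambda>(z,y). (\<phi> z)^2 * k y z)"
  have Hint: "integrable (lborel \<Otimes>\<^sub>M lborel) H"
  proof (rule lborel_pair.Fubini_integrable)
    show "H \<in> borel_measurable (lborel \<Otimes>\<^sub>M lborel)" unfolding H_def k_def by measurable
    have "(\<integral>y. norm (H (z, y)) \<partial>lborel) = (\<phi> z)^2" for z
      unfolding H_def using k0 ky[of z] by simp
    then show "integrable lborel (\<lambda>z. \<integral>y. norm (H (z, y)) \<partial>lborel)" using int2 by simp
    show "AE z in lborel. integrable lborel (\<lambda>y. H (z, y))"
      unfolding H_def using ky by simp
  qed
  have Rint0: "integrable lborel (\<lambda>y. \<integral>z. H (z, y) \<partial>lborel)"
    using lborel_pair.integrable_snd[of "\<lambda>z y. H (z, y)"] Hint by simp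
  have Req0: "(\<integral>y. (\<integral>z. H (z, y) \<partial>lborel) \<partial>lborel) = (\<integral>z. (\<phi> z)^2 \<partial>lborel)"
  proof -
    have "(\<integral>y. (\<integral>z. H (z, y) \<partial>lborel) \<partial>lborel) = (\<integral>z. (\<integral>y. H (z, y) \<partial>lborel) \<partial>lborel)"
      using lborel_pair.Fubini_integral[of "\<lambda>z y. H (z, y)"] Hint by simp
    also have "\<dots> = (\<integral>z. (\<phi> z)^2 \<partial>lborel)"
      unfolding H_def using ky by simp
    finally show ?thesis .
  qed
  define R where "R y = (\<phi> y)^2 / 2 + (1/2) * (\<integral>z. H (z, y) \<partial>lborel)" for y
  have Rint: "integrable lborel R" unfolding R_def using int2 Rint0 by simp
  have Req: "(\<integral>y. R y \<partial>lborel) = (\<integral>z. (\<phi> z)^2 \<partial>lborel)"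
    unfolding R_def using int2 Rint0 Req0 by simp
  define D where "D y = (\<integral>z. \<phi> z * k y z \<partial>lborel)" for y
  have Dmeas[measurable]: "D \<in> borel_measurable borel"
    unfolding D_def k_def by measurable
  have pt: "\<bar>\<phi> y * D y\<bar> \<le> R y" for y
  proof -
    have "\<bar>\<phi> y * D y\<bar> = \<bar>\<integral>z. \<phi> y * (\<phi> z * k y z) \<partial>lborel\<bar>" unfolding D_def by simp
    also have "\<dots> \<le> (\<integral>z. \<bar>\<phi> y * (\<phi> z * k y z)\<bar> \<partial>lborel)" by (rule integral_abs_bound)
    also have "\<dots> \<le> (\<integral>z. ((\<phi> y)^2 / 2) * k y z + (1/2) * ((\<phi> z)^2 * k y z) \<partial>lborel)"
    proof (rule integral_mono)
      show "integrable lborel (\<lambda>z. \<bar>\<phi> y * (\<phi> z * k y z)\<bar>)" using intz1[of y] by simp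
      show "integrable lborel (\<lambda>z. ((\<phi> y)^2 / 2) * k y z + (1/2) * ((\<phi> z)^2 * k y z))"
        using intz2[of y] kz[of y] by simp
      fix z
      have "\<bar>\<phi> y * \<phi> z\<bar> \<le> (\<phi> y)^2 / 2 + (\<phi> z)^2 / 2"
        by (rule amgm)
      then have "\<bar>\<phi> y * \<phi> z\<bar> * k y z \<le> ((\<phi> y)^2 / 2 + (\<phi> z)^2 / 2) * k y z"
        using k0 by (intro mult_right_mono) auto
      then show "\<bar>\<phi> y * (\<phi> z * k y z)\<bar> \<le> ((\<phi> y)^2 / 2) * k y z + (1/2) * ((\<phi> z)^2 * k y z)"
        using k0[of y z] by (simp add: abs_mult algebra_simps)
    qed
    also have "\<dots> = R y"
      unfolding R_def H_def using intz2[of y] kz[of y] by simp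
    finally show ?thesis .
  qed
  show i: "integrable lborel (\<lambda>y. \<phi> y * (\<integral>z. \<phi> z * (a * std_normal_density (a * (y - z))) \<partial>lborel))"
  proof (rule Bochner_Integration.integrable_bound[OF Rint])
    show "AE y in lborel. norm (\<phi> y * (\<integral>z. \<phi> z * (a * std_normal_density (a * (y - z))) \<partial>lborel)) \<le> norm (R y)"
      using pt unfolding D_def k_def by (intro AE_I2) (smt (verit) real_norm_def)
  qed (unfold k_def[symmetric] D_def[symmetric], measurable)
  have "(\<integral>y. \<phi> y * (\<integral>z. \<phi> z * (a * std_normal_density (a * (y - z))) \<partial>lborel) \<partial>lborel) \<le> (\<integral>y. R y \<partial>lborel)"
    using i Rint pt unfolding D_def k_def by (intro integral_mono) (auto simp: abs_le_iff)
  then show "(\<integral>y. \<phi> y * (\<integral>z. \<phi> z * (a * std_normal_density (a * (y - z))) \<partial>lborel) \<partial>lborel) \<le> (\<integral>y. (\<phi> y)^2 \<partial>lborel)"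
    using Req by simp
qed


lemma cnj_FT: "cnj (FT f u) = (\<integral>z. iexp (-(u*z)) * complex_of_real (f z) \<partial>lborel)"
proof -
  have "cnj (FT f u) = (\<integral>z. cnj (iexp (u*z) * complex_of_real (f z)) \<partial>lborel)"
    unfolding FT_def by (rule Bochner_Integration.integral_cnj[symmetric])
  also have "\<dots> = (\<integral>z. iexp (-(u*z)) * complex_of_real (f z) \<partial>lborel)"
    by (simp add: exp_cnj)
  finally show ?thesis .
qed

lemma ft_sq_gauss:
  fixes \<phi> :: "real \<Rightarrow> real" and a :: real
  assumes a: "a > 0" and m[measurable]: "\<phi> \<in> borel_measurable borel" and int: "integrable lborel \<phi>"
  shows "(\<integral>u. exp (-((u/a)^2)/2) * (cmod (FT \<phi> u))^2 \<partial>lborel)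
       = 2*pi * (\<integral>y. \<phi> y * (\<integral>z. \<phi> z * (a * std_normal_density (a * (y - z))) \<partial>lborel) \<partial>lborel)"
proof -
  define e where "e u = exp (-((u/a)^2)/2)" for u
  have [measurable]: "e \<in> borel_measurable borel" unfolding e_def by measurable
  have eint: "integrable lborel e" unfolding e_def using a by (rule integrable_gauss)
  have [measurable]: "FT \<phi> \<in> borel_measurable borel" using m by (rule FT_meas)
  have [measurable]: "(\<lambda>u. cnj (FT \<phi> u)) \<in> borel_measurable borel"
    unfolding cnj_FT by (rule lborel.borel_measurable_lebesgue_integral) measurable
  have e0: "e u \<ge> 0" for u unfolding e_def by simp
  define L where "L = (\<integral>x. \<bar>\<phi> x\<bar> \<partial>lborel)"
  have FTb: "norm (FT \<phi> u) \<le> L" for u unfolding L_def by (rule FT_bound)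
  have eFint: "integrable lborel (\<lambda>u. e u * norm (FT \<phi> u))"
  proof (rule Bochner_Integration.integrable_bound)
    show "integrable lborel (\<lambda>u. L * e u)" using eint by simp
    show "AE u in lborel. norm (e u * norm (FT \<phi> u)) \<le> norm (L * e u)"
    proof (intro AE_I2)
      fix u
      have L0: "L \<ge> 0" unfolding L_def by simp
      have "e u * norm (FT \<phi> u) \<le> e u * L" by (rule mult_left_mono[OF FTb e0])
      then show "norm (e u * norm (FT \<phi> u)) \<le> norm (L * e u)" using L0 e0[of u] by (simp add: mult.commute)
    qed
  qed measurable
  define D where "D y = (\<integral>z. \<phi> z * (a * std_normal_density (a * (y - z))) \<partial>lborel)" for y
  have inner: "(\<integral>u. complex_of_real (e u) * cnj (FT \<phi> u) * iexp (u*y) \<partial>lborel) = complex_of_real (2*pi * D y)" for y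
  proof -
    define F where "F u z = complex_of_real (e u) * iexp (u*y) * (iexp (-(u*z)) * complex_of_real (\<phi> z))" for u z
    have Fint: "integrable (lborel \<Otimes>\<^sub>M lborel) (\<lambda>(u,z). F u z)"
    proof (rule lborel_pair.Fubini_integrable)
      show "(\<lambda>(u,z). F u z) \<in> borel_measurable (lborel \<Otimes>\<^sub>M lborel)" unfolding F_def by measurable
      have "(\<integral>z. norm (F u z) \<partial>lborel) = e u * L" for u
        unfolding F_def L_def using e0 by (simp add: norm_mult)
      then show "integrable lborel (\<lambda>u. \<integral>z. norm ((\<lambda>(u,z). F u z) (u, z)) \<partial>lborel)"
        using eint by simp
      show "AE u in lborel. integrable lborel (\<lambda>z. (\<lambda>(u,z). F u z) (u, z))"
      proof (intro AE_I2)
        fix u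
        show "integrable lborel (\<lambda>z. (\<lambda>(u,z). F u z) (u, z))"
          unfolding F_def split
          by (intro integrable_mult_right Bochner_Integration.integrable_bound[OF int]) (auto simp: norm_mult)
      qed
    qed
    have 1: "(\<integral>u. (\<integral>z. F u z \<partial>lborel) \<partial>lborel) = (\<integral>u. complex_of_real (e u) * cnj (FT \<phi> u) * iexp (u*y) \<partial>lborel)"
    proof (intro Bochner_Integration.integral_cong refl)
      fix u
      show "(\<integral>z. F u z \<partial>lborel) = complex_of_real (e u) * cnj (FT \<phi> u) * iexp (u*y)"
        unfolding F_def cnj_FT by (subst integral_mult_right_zero) (simp only: ac_simps)
    qed
    have 2: "(\<integral>u. F u z \<partial>lborel) = complex_of_real (\<phi> z) * complex_of_real (a * sqrt (2*pi) * exp (-((a * (y - z))^2)/2))" for z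
    proof -
      have "(\<integral>u. F u z \<partial>lborel) = (\<integral>u. complex_of_real (\<phi> z) * (iexp (u * (y - z)) * complex_of_real (exp (-((u / a)^2)/2))) \<partial>lborel)"
      proof (intro Bochner_Integration.integral_cong refl)
        fix u
        have X: "F u z = complex_of_real (\<phi> z) * ((iexp (u*y) * iexp (-(u*z))) * complex_of_real (e u))"
          by (simp add: F_def mult_ac)
        have Y: "iexp (u*y) * iexp (-(u*z)) = iexp (u*(y-z))"
          by (subst iexp_add[symmetric]) (simp add: algebra_simps)
        show "F u z = complex_of_real (\<phi> z) * (iexp (u * (y - z)) * complex_of_real (exp (-((u / a)^2)/2)))"
          unfolding X Y e_def ..
      qed
      also have "\<dots> = complex_of_real (\<phi> z) * complex_of_real (a * sqrt (2*pi) * exp (-((a * (y - z))^2)/2))"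
        using gauss_ft[OF a, of "y - z"] by simp
      finally show ?thesis .
    qed
    have 3: "a * sqrt (2*pi) * exp (-((a * (y - z))^2)/2) = 2*pi * (a * std_normal_density (a * (y - z)))" for z
    proof -
      have "sqrt (2*pi) * sqrt (2*pi) = 2*pi" by simp
      then show ?thesis unfolding std_normal_density_def by (simp add: field_simps)
    qed
    have "(\<integral>u. complex_of_real (e u) * cnj (FT \<phi> u) * iexp (u*y) \<partial>lborel) = (\<integral>z. (\<integral>u. F u z \<partial>lborel) \<partial>lborel)"
      using 1 lborel_pair.Fubini_integral[OF Fint] by simp
    also have "\<dots> = (\<integral>z. complex_of_real (2*pi) * complex_of_real (\<phi> z * (a * std_normal_density (a * (y - z)))) \<partial>lborel)"
      unfolding 2 3 by (simp add: mult_ac)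
    also have "\<dots> = complex_of_real (2*pi * D y)"
      unfolding D_def of_real_mult[of "2*pi"] by (simp only: integral_mult_right_zero integral_complex_of_real)
    finally show ?thesis .
  qed
  define F where "F u y = complex_of_real (e u) * cnj (FT \<phi> u) * (iexp (u*y) * complex_of_real (\<phi> y))" for u y
  have Fint: "integrable (lborel \<Otimes>\<^sub>M lborel) (\<lambda>(u,y). F u y)"
  proof (rule lborel_pair.Fubini_integrable)
    show "(\<lambda>(u,y). F u y) \<in> borel_measurable (lborel \<Otimes>\<^sub>M lborel)" unfolding F_def by measurable
    have "(\<integral>y. norm (F u y) \<partial>lborel) = (e u * norm (FT \<phi> u)) * L" for u
      unfolding F_def L_def using e0 by (simp add: norm_mult)
    then show "integrable lborel (\<lambda>u. \<integral>y. norm ((\<lambda>(u,y). F u y) (u, y)) \<partial>lborel)"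
      using eFint by simp
    show "AE u in lborel. integrable lborel (\<lambda>y. (\<lambda>(u,y). F u y) (u, y))"
    proof (intro AE_I2)
      fix u
      show "integrable lborel (\<lambda>y. (\<lambda>(u,y). F u y) (u, y))"
        unfolding F_def split
        by (intro integrable_mult_right Bochner_Integration.integrable_bound[OF int]) (auto simp: norm_mult)
    qed
  qed
  have o1: "(\<integral>u. (\<integral>y. F u y \<partial>lborel) \<partial>lborel) = (\<integral>u. complex_of_real (e u * (cmod (FT \<phi> u))^2) \<partial>lborel)"
  proof (intro Bochner_Integration.integral_cong refl)
    fix u
    have "(\<integral>y. F u y \<partial>lborel) = complex_of_real (e u) * cnj (FT \<phi> u) * FT \<phi> u"
      unfolding F_def FT_def by (rule integral_mult_right_zero)
    also have "\<dots> = complex_of_real (e u) * complex_of_real ((cmod (FT \<phi> u))^2)"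
      by (simp only: complex_norm_square mult_ac)
    finally show "(\<integral>y. F u y \<partial>lborel) = complex_of_real (e u * (cmod (FT \<phi> u))^2)" by simp
  qed
  have o2: "(\<integral>u. F u y \<partial>lborel) = complex_of_real (\<phi> y) * complex_of_real (2*pi * D y)" for y
  proof -
    have "(\<integral>u. F u y \<partial>lborel) = (\<integral>u. complex_of_real (\<phi> y) * (complex_of_real (e u) * cnj (FT \<phi> u) * iexp (u*y)) \<partial>lborel)"
      unfolding F_def by (intro Bochner_Integration.integral_cong refl) (simp add: mult_ac)
    also have "\<dots> = complex_of_real (\<phi> y) * complex_of_real (2*pi * D y)"
      by (simp only: integral_mult_right_zero inner)
    finally show ?thesis .
  qed
  have "complex_of_real (\<integral>u. e u * (cmod (FT \<phi> u))^2 \<partial>lborel) = (\<integral>u. complex_of_real (e u * (cmod (FT \<phi> u))^2) \<partial>lborel)"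
    by (rule integral_complex_of_real[symmetric])
  also have "\<dots> = (\<integral>y. (\<integral>u. F u y \<partial>lborel) \<partial>lborel)"
    using o1 lborel_pair.Fubini_integral[OF Fint] by simp
  also have "\<dots> = (\<integral>y. complex_of_real (2*pi * (\<phi> y * D y)) \<partial>lborel)"
    unfolding o2 by (simp only: of_real_mult[symmetric] mult_ac)
  also have "\<dots> = complex_of_real (2*pi * (\<integral>y. \<phi> y * D y \<partial>lborel))"
    unfolding of_real_mult[of "2*pi"] by (simp only: integral_mult_right_zero integral_complex_of_real)
  finally show ?thesis unfolding e_def D_def by (simp only: of_real_eq_iff)
qed


lemma FT_L2:
  fixes \<phi> :: "real \<Rightarrow> real"
  assumes m[measurable]: "\<phi> \<in> borel_measurable borel" and int: "integrable lborel \<phi>"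
    and int2: "integrable lborel (\<lambda>x. (\<phi> x)^2)"
  shows "integrable lborel (\<lambda>u. (cmod (FT \<phi> u))^2)"
proof -
  define a :: "nat \<Rightarrow> real" where "a n = real n + 1" for n
  have a0: "a n > 0" for n by (simp add: a_def)
  have ainf: "filterlim a at_top sequentially"
    unfolding a_def by (subst add.commute) (intro filterlim_tendsto_add_at_top[OF tendsto_const] filterlim_real_sequentially)
  define e where "e n u = exp (-((u / a n)^2)/2)" for n u
  have [measurable]: "e n \<in> borel_measurable borel" for n unfolding e_def by measurable
  have [measurable]: "FT \<phi> \<in> borel_measurable borel" using m by (rule FT_meas)
  have e0: "e n u \<ge> 0" for n u unfolding e_def by simp
  define C where "C = 2*pi * (\<integral>y. (\<phi> y)^2 \<partial>lborel)"
  define L where "L = (\<integral>x. \<bar>\<phi> x\<bar> \<partial>lborel)"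
  have FTb: "norm (FT \<phi> u) \<le> L" for u unfolding L_def by (rule FT_bound)
  have L0: "L \<ge> 0" unfolding L_def by simp
  have bnd: "(\<integral>u. e n u * (cmod (FT \<phi> u))^2 \<partial>lborel) \<le> C" for n
    unfolding e_def C_def ft_sq_gauss[OF a0 m int]
    using l2_conv_bound(2)[OF a0 m int int2, of n] by simp
  have intn: "integrable lborel (\<lambda>u. e n u * (cmod (FT \<phi> u))^2)" for n
  proof (rule Bochner_Integration.integrable_bound)
    show "integrable lborel (\<lambda>u. L^2 * e n u)" unfolding e_def using a0[of n]
      by (intro integrable_mult_right integrable_gauss)
    show "AE u in lborel. norm (e n u * (cmod (FT \<phi> u))^2) \<le> norm (L^2 * e n u)"
    proof (intro AE_I2)
      fix u
      have "(cmod (FT \<phi> u))^2 \<le> L^2" using FTb[of u] by (intro power_mono) auto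
      then have "e n u * (cmod (FT \<phi> u))^2 \<le> e n u * L^2" by (rule mult_left_mono[OF _ e0])
      then show "norm (e n u * (cmod (FT \<phi> u))^2) \<le> norm (L^2 * e n u)" using e0[of n u] by (simp add: mult.commute)
    qed
  qed measurable
  have nn: "(\<integral>\<^sup>+u. ennreal (e n u * (cmod (FT \<phi> u))^2) \<partial>lborel) \<le> ennreal C" for n
    using nn_integral_eq_integral[OF intn[of n]] bnd[of n] e0 by (simp add: ennreal_leI)
  have lim: "(\<lambda>n. ennreal (e n u * (cmod (FT \<phi> u))^2)) \<longlonglongrightarrow> ennreal ((cmod (FT \<phi> u))^2)" for u
  proof -
    have "(\<lambda>n. u / a n) \<longlonglongrightarrow> 0"
      by (intro tendsto_divide_0[OF tendsto_const] filterlim_at_top_imp_at_infinity ainf)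
    then have "(\<lambda>n. e n u) \<longlonglongrightarrow> exp (-((0::real)^2)/2)"
      unfolding e_def by (intro tendsto_intros) auto
    then have "(\<lambda>n. e n u * (cmod (FT \<phi> u))^2) \<longlonglongrightarrow> 1 * (cmod (FT \<phi> u))^2"
      by (intro tendsto_intros) auto
    then show ?thesis by (intro tendsto_ennrealI) simp
  qed
  have "(\<integral>\<^sup>+u. ennreal ((cmod (FT \<phi> u))^2) \<partial>lborel)
      = (\<integral>\<^sup>+u. liminf (\<lambda>n. ennreal (e n u * (cmod (FT \<phi> u))^2)) \<partial>lborel)"
    using lim by (intro nn_integral_cong) (rule lim_imp_Liminf[symmetric]; simp)
  also have "\<dots> \<le> liminf (\<lambda>n. \<integral>\<^sup>+u. ennreal (e n u * (cmod (FT \<phi> u))^2) \<partial>lborel)"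
    by (rule nn_integral_liminf) measurable
  also have "\<dots> \<le> ennreal C"
    using nn by (intro order_trans[OF Liminf_le_Limsup Limsup_bounded]) auto
  finally have "(\<integral>\<^sup>+u. ennreal (norm ((cmod (FT \<phi> u))^2)) \<partial>lborel) < \<infinity>"
    by (simp add: le_less_trans)
  then show ?thesis by (intro integrableI_bounded) measurable
qed


lemma ft_mult_iFT:
  fixes r :: "real \<Rightarrow> real" and \<psi> :: "real \<Rightarrow> complex"
  assumes [measurable]: "r \<in> borel_measurable borel" and rint: "integrable lborel r"
    and [measurable]: "\<psi> \<in> borel_measurable borel" and pint: "integrable lborel \<psi>"
  shows "iFT (\<lambda>u. FT r u * \<psi> u) x = (\<integral>y. complex_of_real (r y) * iFT \<psi> (x - y) \<partial>lborel)"
proof -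
  define F where "F u y = iexp (-(u*x)) * \<psi> u * (iexp (u*y) * complex_of_real (r y))" for u y
  have Fint: "integrable (lborel \<Otimes>\<^sub>M lborel) (\<lambda>(u,y). F u y)"
  proof (rule lborel_pair.Fubini_integrable)
    show "(\<lambda>(u,y). F u y) \<in> borel_measurable (lborel \<Otimes>\<^sub>M lborel)" unfolding F_def by measurable
    have "(\<integral>y. norm (F u y) \<partial>lborel) = norm (\<psi> u) * (\<integral>y. \<bar>r y\<bar> \<partial>lborel)" for u
      unfolding F_def by (simp add: norm_mult)
    then show "integrable lborel (\<lambda>u. \<integral>y. norm ((\<lambda>(u,y). F u y) (u, y)) \<partial>lborel)"
      using pint by simp
    show "AE u in lborel. integrable lborel (\<lambda>y. (\<lambda>(u,y). F u y) (u, y))"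
    proof (intro AE_I2)
      fix u
      show "integrable lborel (\<lambda>y. (\<lambda>(u,y). F u y) (u, y))"
        unfolding F_def split
        by (intro integrable_mult_right Bochner_Integration.integrable_bound[OF rint]) (auto simp: norm_mult)
    qed
  qed
  have 1: "(\<integral>u. (\<integral>y. F u y \<partial>lborel) \<partial>lborel) = (\<integral>u. iexp (-(u*x)) * (FT r u * \<psi> u) \<partial>lborel)"
  proof (intro Bochner_Integration.integral_cong refl)
    fix u
    show "(\<integral>y. F u y \<partial>lborel) = iexp (-(u*x)) * (FT r u * \<psi> u)"
      unfolding F_def FT_def by (subst integral_mult_right_zero) (simp only: ac_simps)
  qed
  have 2: "(\<integral>u. F u y \<partial>lborel) = complex_of_real (2*pi) * (complex_of_real (r y) * iFT \<psi> (x - y))" for y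
  proof -
    have "(\<integral>u. F u y \<partial>lborel) = (\<integral>u. complex_of_real (r y) * (iexp (-(u*(x - y))) * \<psi> u) \<partial>lborel)"
    proof (intro Bochner_Integration.integral_cong refl)
      fix u
      have X: "F u y = complex_of_real (r y) * ((iexp (-(u*x)) * iexp (u*y)) * \<psi> u)"
        by (simp add: F_def mult_ac)
      have Y: "iexp (-(u*x)) * iexp (u*y) = iexp (-(u*(x-y)))"
        by (subst iexp_add[symmetric]) (simp add: algebra_simps)
      show "F u y = complex_of_real (r y) * (iexp (-(u*(x - y))) * \<psi> u)" unfolding X Y ..
    qed
    also have "\<dots> = complex_of_real (r y) * (\<integral>u. iexp (-(u*(x - y))) * \<psi> u \<partial>lborel)"
      by (rule integral_mult_right_zero)
    also have "\<dots> = complex_of_real (2*pi) * (complex_of_real (r y) * iFT \<psi> (x - y))"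
      unfolding iFT_def by (simp add: pi_neq_zero)
    finally show ?thesis .
  qed
  have "(\<integral>u. iexp (-(u*x)) * (FT r u * \<psi> u) \<partial>lborel) = (\<integral>y. (\<integral>u. F u y \<partial>lborel) \<partial>lborel)"
    using 1 lborel_pair.Fubini_integral[OF Fint] by simp
  also have "\<dots> = complex_of_real (2*pi) * (\<integral>y. complex_of_real (r y) * iFT \<psi> (x - y) \<partial>lborel)"
    unfolding 2 by (rule integral_mult_right_zero)
  finally show ?thesis unfolding iFT_def by (simp add: pi_neq_zero)
qed

lemma amgm2:
  fixes t a b :: real assumes t: "t > 0"
  shows "a * b \<le> (t/2) * a^2 + (1/(2*t)) * b^2"
proof -
  have "\<bar>(t * a) * b\<bar> \<le> (t * a)^2 / 2 + b^2 / 2" by (rule amgm)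
  then have "t * (a * b) \<le> (t * a)^2 / 2 + b^2 / 2" by (simp add: mult.assoc)
  then have "(t * (a * b)) / t \<le> ((t * a)^2 / 2 + b^2 / 2) / t" using t by (intro divide_right_mono) auto
  moreover have "((t * a)^2 / 2 + b^2 / 2) / t = (t/2) * a^2 + (1/(2*t)) * b^2"
    using t by (simp add: field_simps power2_eq_square)
  ultimately show ?thesis using t by simp
qed

lemma L2_prod_tendsto:
  fixes A :: "nat \<Rightarrow> real \<Rightarrow> complex" and \<psi> :: "real \<Rightarrow> complex"
  assumes [measurable]: "\<And>n. A n \<in> borel_measurable borel" "\<psi> \<in> borel_measurable borel"
    and Aint: "\<And>n. integrable lborel (\<lambda>u. (cmod (A n u))^2)"
    and Alim: "(\<lambda>n. \<integral>u. (cmod (A n u))^2 \<partial>lborel) \<longlonglongrightarrow> 0"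
    and pint: "integrable lborel (\<lambda>u. (cmod (\<psi> u))^2)"
  shows "\<And>n. integrable lborel (\<lambda>u. cmod (A n u) * cmod (\<psi> u))"
    "(\<lambda>n. \<integral>u. cmod (A n u) * cmod (\<psi> u) \<partial>lborel) \<longlonglongrightarrow> 0"
proof -
  define B where "B = (\<integral>u. (cmod (\<psi> u))^2 \<partial>lborel) + 1"
  have B1: "B \<ge> 1" unfolding B_def by simp
  have pw: "cmod (A n u) * cmod (\<psi> u) \<le> (t/2) * (cmod (A n u))^2 + (1/(2*t)) * (cmod (\<psi> u))^2"
    if t: "t > 0" for t n u
    using amgm2[OF t] .
  have ints: "integrable lborel (\<lambda>u. (t/2) * (cmod (A n u))^2 + (1/(2*t)) * (cmod (\<psi> u))^2)" for t n
    using Aint pint by simp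
  show int: "integrable lborel (\<lambda>u. cmod (A n u) * cmod (\<psi> u))" for n
  proof (rule Bochner_Integration.integrable_bound[OF ints[of 1 n]])
    show "AE u in lborel. norm (cmod (A n u) * cmod (\<psi> u)) \<le> norm ((1/2) * (cmod (A n u))^2 + (1/(2*1)) * (cmod (\<psi> u))^2)"
      using pw[of 1 n] by (intro AE_I2) simp
  qed measurable
  have bnd: "(\<integral>u. cmod (A n u) * cmod (\<psi> u) \<partial>lborel) \<le> (t/2) * (\<integral>u. (cmod (A n u))^2 \<partial>lborel) + B / (2*t)"
    if t: "t > 0" for t n
  proof -
    have "(\<integral>u. cmod (A n u) * cmod (\<psi> u) \<partial>lborel) \<le> (\<integral>u. (t/2) * (cmod (A n u))^2 + (1/(2*t)) * (cmod (\<psi> u))^2 \<partial>lborel)"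
      using int ints pw t by (intro integral_mono) auto
    also have "\<dots> = (t/2) * (\<integral>u. (cmod (A n u))^2 \<partial>lborel) + (1/(2*t)) * (\<integral>u. (cmod (\<psi> u))^2 \<partial>lborel)"
      using Aint pint by simp
    also have "\<dots> \<le> (t/2) * (\<integral>u. (cmod (A n u))^2 \<partial>lborel) + B / (2*t)"
      using t unfolding B_def by (simp add: divide_simps)
    finally show ?thesis .
  qed
  show "(\<lambda>n. \<integral>u. cmod (A n u) * cmod (\<psi> u) \<partial>lborel) \<longlonglongrightarrow> 0"
  proof (rule tendstoI)
    fix \<epsilon> :: real assume e: "\<epsilon> > 0"
    define t where "t = B / \<epsilon>"
    have s0: "t > 0" unfolding t_def using e B1 by simp
    have "eventually (\<lambda>n. dist (\<integral>u. (cmod (A n u))^2 \<partial>lborel) 0 < \<epsilon> / t) sequentially"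
      using Alim s0 e by (intro tendstoD) auto
    then show "eventually (\<lambda>n. dist (\<integral>u. cmod (A n u) * cmod (\<psi> u) \<partial>lborel) 0 < \<epsilon>) sequentially"
    proof eventually_elim
      case (elim n)
      have nn: "(\<integral>u. cmod (A n u) * cmod (\<psi> u) \<partial>lborel) \<ge> 0" by simp
      have "(t/2) * (\<integral>u. (cmod (A n u))^2 \<partial>lborel) < (t/2) * (\<epsilon> / t)"
        using elim s0 by (intro mult_strict_left_mono) (auto simp: dist_real_def)
      also have "(t/2) * (\<epsilon> / t) = \<epsilon>/2" using s0 by simp
      finally have "(t/2) * (\<integral>u. (cmod (A n u))^2 \<partial>lborel) < \<epsilon>/2" .
      moreover have "B / (2*t) = \<epsilon>/2" unfolding t_def using e B1 by simp
      ultimately show ?case using bnd[OF s0, of n] nn by (simp add: dist_real_def)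
    qed
  qed
qed


lemma sq_shift:
  fixes f :: "real \<Rightarrow> real"
  assumes "integrable lborel (\<lambda>x. (f x)^2)"
  shows "integrable lborel (\<lambda>y. (f (c - y))^2)" "(\<integral>y. (f (c - y))^2 \<partial>lborel) = (\<integral>y. (f y)^2 \<partial>lborel)"
proof -
  have "integrable lborel (\<lambda>y. (\<lambda>x. (f x)^2) (c + (-1) * y))"
    by (rule lborel_integrable_real_affine[OF assms]) simp
  then show "integrable lborel (\<lambda>y. (f (c - y))^2)" by simp
  have "(\<integral>y. (f y)^2 \<partial>lborel) = \<bar>-1\<bar> *\<^sub>R (\<integral>y. (\<lambda>x. (f x)^2) (c + (-1) * y) \<partial>lborel)"
    by (rule lborel_integral_real_affine) simp
  then show "(\<integral>y. (f (c - y))^2 \<partial>lborel) = (\<integral>y. (f y)^2 \<partial>lborel)" by simp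
qed

lemma conv_sub:
  fixes f g :: "real \<Rightarrow> real"
  shows "(\<integral>y. g y * f (z - y) \<partial>lborel) = (\<integral>y. g (z - y) * f y \<partial>lborel)"
proof -
  have "(\<integral>y. g y * f (z - y) \<partial>lborel) = \<bar>-1\<bar> *\<^sub>R (\<integral>y. (\<lambda>y. g y * f (z - y)) (z + (-1) * y) \<partial>lborel)"
    by (rule lborel_integral_real_affine) simp
  then show ?thesis by simp
qed

lemma prod_shift_bound:
  fixes f g :: "real \<Rightarrow> real"
  assumes [measurable]: "f \<in> borel_measurable borel" "g \<in> borel_measurable borel"
    and f2: "integrable lborel (\<lambda>x. (f x)^2)" and g2: "integrable lborel (\<lambda>x. (g x)^2)"
  shows "integrable lborel (\<lambda>y. g y * f (c - y))"
    "(\<integral>y. \<bar>g y * f (c - y)\<bar> \<partial>lborel) \<le> ((\<integral>y. (g y)^2 \<partial>lborel) + (\<integral>y. (f y)^2 \<partial>lborel)) / 2"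
proof -
  have ib: "integrable lborel (\<lambda>y. (g y)^2 / 2 + (f (c - y))^2 / 2)"
    using g2 sq_shift(1)[OF f2, of c] by simp
  have pw: "\<bar>g y * f (c - y)\<bar> \<le> (g y)^2 / 2 + (f (c - y))^2 / 2" for y by (rule amgm)
  show i: "integrable lborel (\<lambda>y. g y * f (c - y))"
    by (rule Bochner_Integration.integrable_bound[OF ib]) (use pw in \<open>auto intro!: AE_I2 order_trans[OF _ abs_ge_self]\<close>)
  have "(\<integral>y. \<bar>g y * f (c - y)\<bar> \<partial>lborel) \<le> (\<integral>y. (g y)^2 / 2 + (f (c - y))^2 / 2 \<partial>lborel)"
    using i ib pw by (intro integral_mono) auto
  also have "\<dots> = ((\<integral>y. (g y)^2 \<partial>lborel) + (\<integral>y. (f y)^2 \<partial>lborel)) / 2"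
    using g2 sq_shift[OF f2, of c] by simp
  finally show "(\<integral>y. \<bar>g y * f (c - y)\<bar> \<partial>lborel) \<le> ((\<integral>y. (g y)^2 \<partial>lborel) + (\<integral>y. (f y)^2 \<partial>lborel)) / 2" .
qed

lemma bounded_of_inversion:
  fixes f :: "real \<Rightarrow> real"
  assumes cont: "continuous_on UNIV f" and int: "integrable lborel f" and intF: "integrable lborel (FT f)"
  shows "\<bar>f z\<bar> \<le> (\<integral>u. norm (FT f u) \<partial>lborel)"
proof -
  have "\<bar>f z\<bar> = norm (iFT (FT f) z)" using fourier_inversion[OF cont int intF, of z] by simp
  also have "\<dots> = (1/(2*pi)) * norm (\<integral>u. iexp (-(u*z)) * FT f u \<partial>lborel)"
    unfolding iFT_def norm_mult norm_of_real by (simp add: pi_gt_zero less_imp_le)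
  also have "\<dots> \<le> 1 * norm (\<integral>u. iexp (-(u*z)) * FT f u \<partial>lborel)"
    using pi_gt3 by (intro mult_right_mono) auto
  also have "\<dots> \<le> (\<integral>u. norm (iexp (-(u*z)) * FT f u) \<partial>lborel)" by simp
  also have "\<dots> = (\<integral>u. norm (FT f u) \<partial>lborel)" by (simp add: norm_mult)
  finally show ?thesis .
qed


lemma perk:
  fixes f g :: "real \<Rightarrow> real" and Q :: "real measure"
  assumes fQ: "finite_measure Q" and sQ: "sets Q = sets borel"
    and [measurable]: "f \<in> borel_measurable borel" "g \<in> borel_measurable borel"
    and f2: "integrable lborel (\<lambda>x. (f x)^2)" and g2: "integrable lborel (\<lambda>x. (g x)^2)"
  shows "integrable lborel (\<lambda>y. g y * (\<integral>w. f (v - w - y) \<partial>Q))"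
    "(\<integral>y. g y * (\<integral>w. f (v - w - y) \<partial>Q) \<partial>lborel) = (\<integral>w. fconv g f (v - w) \<partial>Q)"
    "(\<integral>y. \<bar>g y * (\<integral>w. f (v - w - y) \<partial>Q)\<bar> \<partial>lborel)
       \<le> ((\<integral>y. (g y)^2 \<partial>lborel) + (\<integral>y. (f y)^2 \<partial>lborel)) / 2 * measure Q UNIV"
proof -
  interpret Q: finite_measure Q by (rule fQ)
  interpret P: pair_sigma_finite Q lborel ..
  note sQ[measurable_cong]
  have spQ: "space Q = UNIV" using sets_eq_imp_space_eq[OF sQ] by simp
  define M2 where "M2 = ((\<integral>y. (g y)^2 \<partial>lborel) + (\<integral>y. (f y)^2 \<partial>lborel)) / 2"
  define H where "H w y = g y * f (v - w - y)" for w y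
  have [measurable]: "(\<lambda>(w,y). H w y) \<in> borel_measurable (Q \<Otimes>\<^sub>M lborel)" unfolding H_def by measurable
  have Hy: "integrable lborel (\<lambda>y. H w y)" for w
    unfolding H_def using prod_shift_bound(1)[of f g, OF _ _ f2 g2, of "v - w"] by simp
  have Hb: "(\<integral>y. norm (H w y) \<partial>lborel) \<le> M2" for w
    unfolding H_def M2_def using prod_shift_bound(2)[of f g, OF _ _ f2 g2, of "v - w"] by simp
  have Hnm[measurable]: "(\<lambda>w. \<integral>y. norm (H w y) \<partial>lborel) \<in> borel_measurable Q"
    by measurable
  have Hint: "integrable (Q \<Otimes>\<^sub>M lborel) (\<lambda>(w,y). H w y)"
  proof (rule P.Fubini_integrable)
    show "integrable Q (\<lambda>w. \<integral>y. norm ((\<lambda>(w,y). H w y) (w, y)) \<partial>lborel)"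
      using Hb by (intro Q.integrable_const_bound[where B=M2]) auto
  qed (use Hy in auto)
  have Haint: "integrable (Q \<Otimes>\<^sub>M lborel) (\<lambda>(w,y). \<bar>H w y\<bar>)"
    using integrable_abs[OF Hint] by (simp add: case_prod_beta')
  have eq1: "(\<integral>w. H w y \<partial>Q) = g y * (\<integral>w. f (v - w - y) \<partial>Q)" for y
    unfolding H_def by (rule integral_mult_right_zero)
  show "integrable lborel (\<lambda>y. g y * (\<integral>w. f (v - w - y) \<partial>Q))"
    using P.integrable_snd[of H] Hint by (simp add: eq1)
  have "(\<integral>y. g y * (\<integral>w. f (v - w - y) \<partial>Q) \<partial>lborel) = (\<integral>y. (\<integral>w. H w y \<partial>Q) \<partial>lborel)"
    by (simp add: eq1)
  also have "\<dots> = (\<integral>w. (\<integral>y. H w y \<partial>lborel) \<partial>Q)"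
    using P.Fubini_integral[of H] Hint by simp
  also have "\<dots> = (\<integral>w. fconv g f (v - w) \<partial>Q)"
    unfolding H_def fconv_def by (rule Bochner_Integration.integral_cong[OF refl]) (rule conv_sub)
  finally show "(\<integral>y. g y * (\<integral>w. f (v - w - y) \<partial>Q) \<partial>lborel) = (\<integral>w. fconv g f (v - w) \<partial>Q)" .
  have Ha2: "integrable lborel (\<lambda>y. \<integral>w. \<bar>H w y\<bar> \<partial>Q)"
    using P.integrable_snd[of "\<lambda>w y. \<bar>H w y\<bar>"] Haint by simp
  have pt: "\<bar>g y * (\<integral>w. f (v - w - y) \<partial>Q)\<bar> \<le> (\<integral>w. \<bar>H w y\<bar> \<partial>Q)" for y
    unfolding eq1[symmetric] by (rule integral_abs_bound)
  have "(\<integral>y. \<bar>g y * (\<integral>w. f (v - w - y) \<partial>Q)\<bar> \<partial>lborel) \<le> (\<integral>y. (\<integral>w. \<bar>H w y\<bar> \<partial>Q) \<partial>lborel)"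
    using Ha2 pt \<open>integrable lborel (\<lambda>y. g y * (\<integral>w. f (v - w - y) \<partial>Q))\<close> by (intro integral_mono) auto
  also have "\<dots> = (\<integral>w. (\<integral>y. \<bar>H w y\<bar> \<partial>lborel) \<partial>Q)"
    using P.Fubini_integral[of "\<lambda>w y. \<bar>H w y\<bar>"] Haint by simp
  also have "\<dots> \<le> (\<integral>w. M2 \<partial>Q)"
    using Hb Hy by (intro integral_mono P.integrable_fst[of "\<lambda>w y. \<bar>H w y\<bar>", OF Haint]) auto
  also have "\<dots> = M2 * measure Q UNIV" by (simp add: spQ)
  finally show "(\<integral>y. \<bar>g y * (\<integral>w. f (v - w - y) \<partial>Q)\<bar> \<partial>lborel)
       \<le> ((\<integral>y. (g y)^2 \<partial>lborel) + (\<integral>y. (f y)^2 \<partial>lborel)) / 2 * measure Q UNIV" unfolding M2_def .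
qed


lemma part2_rep:
  fixes f g :: "real \<Rightarrow> real" and \<nu> :: "real measure"
  assumes fin: "finite_measure \<nu>" and sets: "sets \<nu> = sets borel" and lam: "measure \<nu> UNIV = lam"
    and cont: "continuous_on UNIV f" and int: "integrable lborel f" and intF: "integrable lborel (FT f)"
    and f2: "integrable lborel (\<lambda>x. (f x)^2)"
    and gm[measurable]: "g \<in> borel_measurable borel" and g2: "integrable lborel (\<lambda>x. (g x)^2)"
  shows "integrable lborel (\<lambda>y. complex_of_real (g y) * conv_inv_meas (\<lambda>y. complex_of_real (f y)) \<Delta> \<gamma> lam \<nu> (x - y))"
    "(\<integral>y. complex_of_real (g y) * conv_inv_meas (\<lambda>y. complex_of_real (f y)) \<Delta> \<gamma> lam \<nu> (x - y) \<partial>lborel)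
       = conv_inv_meas (\<lambda>y. complex_of_real (fconv g f y)) \<Delta> \<gamma> lam \<nu> x"
proof -
  have fm[measurable]: "f \<in> borel_measurable borel" using cont by (rule cont_borel)
  define N where "N = refl_meas \<nu>"
  define P where "P k = conv_pow N k" for k
  have N: "finite_measure N" "sets N = sets borel" "measure N UNIV = lam"
    using refl_meas_props[OF fin sets] lam unfolding N_def by auto
  have Pf: "finite_measure (P k)" and Ps: "sets (P k) = sets borel" and Pm: "measure (P k) UNIV = lam ^ k" for k
    using conv_pow_props[OF N(1,2), of k] N(3) unfolding P_def by auto
  have lam0: "lam \<ge> 0" using lam by auto
  define E where "E = exp (lam * \<Delta>)"
  define c where "c k = (- \<Delta>) ^ k / fact k" for k
  define b where "b k = (\<bar>\<Delta>\<bar> * lam) ^ k / fact k" for k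
  have b0: "b k \<ge> 0" for k unfolding b_def using lam0 by simp
  have bsum: "summable b"
    using summable_exp[of "\<bar>\<Delta>\<bar> * lam"] unfolding b_def by (simp add: divide_inverse mult.commute)
  have cb: "\<bar>c k\<bar> * lam ^ k = b k" for k unfolding c_def b_def by (simp add: power_abs power_mult_distrib)
  have E0: "E > 0" unfolding E_def by simp
  define Mf where "Mf = (\<integral>u. norm (FT f u) \<partial>lborel)"
  have fb: "\<bar>f z\<bar> \<le> Mf" for z unfolding Mf_def by (rule bounded_of_inversion[OF cont int intF])
  have Mf0: "Mf \<ge> 0" unfolding Mf_def by simp
  define M2 where "M2 = ((\<integral>y. (g y)^2 \<partial>lborel) + (\<integral>y. (f y)^2 \<partial>lborel)) / 2"
  define v where "v = x - \<gamma> * \<Delta>"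
  define A where "A k y = (\<integral>w. f (v - w - y) \<partial>P k)" for k y
  have Akb: "\<bar>A k y\<bar> \<le> Mf * lam ^ k" for k y
  proof -
    interpret Q: finite_measure "P k" by (rule Pf)
    note Ps[measurable_cong]
    have sp: "space (P k) = UNIV" using sets_eq_imp_space_eq[OF Ps] by simp
    have "\<bar>A k y\<bar> \<le> (\<integral>w. \<bar>f (v - w - y)\<bar> \<partial>P k)" unfolding A_def by (rule integral_abs_bound)
    also have "\<dots> \<le> (\<integral>w. Mf \<partial>P k)"
      using fb Mf0 by (intro integral_mono Q.integrable_const_bound[where B=Mf]) auto
    also have "\<dots> = Mf * lam ^ k" using Pm[of k] by (simp add: sp)
    finally show ?thesis .
  qed
  have per1: "integrable lborel (\<lambda>y. g y * A k y)" for k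
    unfolding A_def by (rule perk(1)[OF Pf Ps fm gm f2 g2])
  have per2: "(\<integral>y. g y * A k y \<partial>lborel) = (\<integral>w. fconv g f (v - w) \<partial>P k)" for k
    unfolding A_def by (rule perk(2)[OF Pf Ps fm gm f2 g2])
  have per3: "(\<integral>y. \<bar>g y * A k y\<bar> \<partial>lborel) \<le> M2 * lam ^ k" for k
    unfolding A_def M2_def using perk(3)[OF Pf[of k] Ps[of k] fm gm f2 g2, of v] Pm[of k] by simp
  have Phi_eq: "conv_inv_meas (\<lambda>y. complex_of_real (f y)) \<Delta> \<gamma> lam \<nu> (x - y)
      = complex_of_real E * (\<Sum>k. complex_of_real (c k) * complex_of_real (A k y))" for y
  proof -
    have "(\<integral>w. complex_of_real (f (x - y - \<gamma> * \<Delta> - w)) \<partial>conv_pow (refl_meas \<nu>) k) = complex_of_real (A k y)" for k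
    proof -
      have "(\<integral>w. complex_of_real (f (x - y - \<gamma> * \<Delta> - w)) \<partial>conv_pow (refl_meas \<nu>) k)
          = (\<integral>w. complex_of_real (f (v - w - y)) \<partial>P k)"
        unfolding P_def N_def v_def by (rule Bochner_Integration.integral_cong[OF refl]) (simp add: algebra_simps)
      then show ?thesis unfolding A_def by simp
    qed
    then show ?thesis unfolding conv_inv_meas_def E_def c_def by simp
  qed
  have RHS_eq: "conv_inv_meas (\<lambda>y. complex_of_real (fconv g f y)) \<Delta> \<gamma> lam \<nu> x
      = complex_of_real E * (\<Sum>k. complex_of_real (c k) * complex_of_real (\<integral>w. fconv g f (v - w) \<partial>P k))"
    unfolding conv_inv_meas_def E_def c_def P_def N_def v_def by simp
  define T where "T k y = complex_of_real (E * c k) * complex_of_real (g y * A k y)" for k y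
  have Tint: "integrable lborel (T k)" for k
    unfolding T_def by (intro integrable_mult_right integrable_of_real per1)
  have Tnorm_int: "(\<integral>y. norm (T k y) \<partial>lborel) \<le> E * M2 * b k" for k
  proof -
    have "(\<integral>y. norm (T k y) \<partial>lborel) = E * \<bar>c k\<bar> * (\<integral>y. \<bar>g y * A k y\<bar> \<partial>lborel)"
      unfolding T_def using E0 by (simp add: norm_mult abs_mult)
    also have "\<dots> \<le> E * \<bar>c k\<bar> * (M2 * lam ^ k)"
      using per3[of k] E0 by (intro mult_left_mono) auto
    also have "\<dots> = E * M2 * b k" using cb[of k] by (simp add: mult_ac)
    finally show ?thesis .
  qed
  have Tnorm_pt: "norm (T k y) \<le> (E * \<bar>g y\<bar> * Mf) * b k" for k y
  proof -
    have "\<bar>c k\<bar> * \<bar>A k y\<bar> \<le> \<bar>c k\<bar> * (Mf * lam ^ k)" using Akb by (intro mult_left_mono) auto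
    also have "\<dots> = Mf * b k" using cb[of k] by (simp add: mult_ac)
    finally have "\<bar>c k\<bar> * \<bar>A k y\<bar> \<le> Mf * b k" .
    then have "(E * \<bar>g y\<bar>) * (\<bar>c k\<bar> * \<bar>A k y\<bar>) \<le> (E * \<bar>g y\<bar>) * (Mf * b k)"
      using E0 by (intro mult_left_mono) auto
    then show ?thesis unfolding T_def using E0 by (simp add: norm_mult abs_mult mult_ac)
  qed
  have bs2: "summable (\<lambda>k. C * b k)" for C using summable_mult[OF bsum, of C] .
  have S: "(\<lambda>k. integral\<^sup>L lborel (T k)) sums (\<integral>y. (\<Sum>k. T k y) \<partial>lborel)"
    and Sint: "integrable lborel (\<lambda>y. \<Sum>k. T k y)"
  proof -
    have a1: "\<And>k. integrable lborel (T k)" by (rule Tint)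
    have a2: "AE y in lborel. summable (\<lambda>k. norm (T k y))"
      by (intro AE_I2 summable_comparison_test'[OF bs2, of 0]) (use Tnorm_pt in simp)
    have a3: "summable (\<lambda>k. \<integral>y. norm (T k y) \<partial>lborel)"
      by (rule summable_comparison_test'[OF bs2[of "E * M2"], of 0]) (use Tnorm_int in \<open>simp add: mult.assoc\<close>)
    show "(\<lambda>k. integral\<^sup>L lborel (T k)) sums (\<integral>y. (\<Sum>k. T k y) \<partial>lborel)" by (rule sums_integral[OF a1 a2 a3])
    show "integrable lborel (\<lambda>y. \<Sum>k. T k y)" by (rule integrable_suminf[OF a1 a2 a3])
  qed
  have Tsum: "(\<Sum>k. T k y) = complex_of_real (g y) * conv_inv_meas (\<lambda>y. complex_of_real (f y)) \<Delta> \<gamma> lam \<nu> (x - y)" for y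
  proof -
    have sm: "summable (\<lambda>k. complex_of_real (c k) * complex_of_real (A k y))"
    proof (rule summable_comparison_test'[OF bs2[of Mf], of 0])
      fix k :: nat
      have "\<bar>c k\<bar> * \<bar>A k y\<bar> \<le> \<bar>c k\<bar> * (Mf * lam ^ k)" using Akb by (intro mult_left_mono) auto
      also have "\<dots> = Mf * b k" using cb[of k] by (simp add: mult_ac)
      finally show "norm (complex_of_real (c k) * complex_of_real (A k y)) \<le> Mf * b k" by (simp add: norm_mult)
    qed
    have "T k y = (complex_of_real (g y) * complex_of_real E) * (complex_of_real (c k) * complex_of_real (A k y))" for k
      unfolding T_def by (simp add: mult_ac)
    then have "(\<Sum>k. T k y) = (complex_of_real (g y) * complex_of_real E) * (\<Sum>k. complex_of_real (c k) * complex_of_real (A k y))"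
      using suminf_mult[OF sm] by simp
    then show ?thesis unfolding Phi_eq by (simp add: mult_ac)
  qed
  show "integrable lborel (\<lambda>y. complex_of_real (g y) * conv_inv_meas (\<lambda>y. complex_of_real (f y)) \<Delta> \<gamma> lam \<nu> (x - y))"
    using Sint unfolding Tsum .
  have Tk: "integral\<^sup>L lborel (T k) = complex_of_real E * (complex_of_real (c k) * complex_of_real (\<integral>w. fconv g f (v - w) \<partial>P k))" for k
  proof -
    have "integral\<^sup>L lborel (T k) = complex_of_real (E * c k) * complex_of_real (\<integral>y. g y * A k y \<partial>lborel)"
      unfolding T_def by (simp only: integral_mult_right_zero integral_complex_of_real)
    then show ?thesis unfolding per2 by (simp add: mult_ac)
  qed
  have "(\<lambda>k. complex_of_real E * (complex_of_real (c k) * complex_of_real (\<integral>w. fconv g f (v - w) \<partial>P k)))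
      sums (\<integral>y. complex_of_real (g y) * conv_inv_meas (\<lambda>y. complex_of_real (f y)) \<Delta> \<gamma> lam \<nu> (x - y) \<partial>lborel)"
    using S unfolding Tk Tsum .
  then have sm2: "summable (\<lambda>k. complex_of_real E * (complex_of_real (c k) * complex_of_real (\<integral>w. fconv g f (v - w) \<partial>P k)))"
    and eq2: "(\<integral>y. complex_of_real (g y) * conv_inv_meas (\<lambda>y. complex_of_real (f y)) \<Delta> \<gamma> lam \<nu> (x - y) \<partial>lborel)
       = (\<Sum>k. complex_of_real E * (complex_of_real (c k) * complex_of_real (\<integral>w. fconv g f (v - w) \<partial>P k)))"
    by (auto simp: sums_iff)
  have "summable (\<lambda>k. complex_of_real (c k) * complex_of_real (\<integral>w. fconv g f (v - w) \<partial>P k))"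
    using sm2 E0 by simp
  then show "(\<integral>y. complex_of_real (g y) * conv_inv_meas (\<lambda>y. complex_of_real (f y)) \<Delta> \<gamma> lam \<nu> (x - y) \<partial>lborel)
       = conv_inv_meas (\<lambda>y. complex_of_real (fconv g f y)) \<Delta> \<gamma> lam \<nu> x"
    unfolding eq2 RHS_eq by (rule suminf_mult)
qed


lemma inv_phi_bound:
  assumes fin: "finite_measure \<nu>" and sets: "sets \<nu> = sets borel" and lam: "measure \<nu> UNIV = lam"
  shows "norm (inverse (phi \<Delta> \<gamma> lam \<nu> (-u))) \<le> exp (lam*\<Delta>) * exp (\<bar>\<Delta>\<bar> * lam)"
proof -
  have "Re (- (complex_of_real \<Delta> * char \<nu> (-u))) \<le> cmod (complex_of_real \<Delta> * char \<nu> (-u))"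
    using complex_Re_le_cmod[of "- (complex_of_real \<Delta> * char \<nu> (-u))"] by simp
  also have "\<dots> = \<bar>\<Delta>\<bar> * cmod (char \<nu> (-u))" by (simp add: norm_mult)
  also have "\<dots> \<le> \<bar>\<Delta>\<bar> * lam" using char_bound[OF fin sets, of "-u"] lam by (intro mult_left_mono) auto
  finally have r: "Re (- (complex_of_real \<Delta> * char \<nu> (-u))) \<le> \<bar>\<Delta>\<bar> * lam" .
  have "norm (inverse (phi \<Delta> \<gamma> lam \<nu> (-u))) = exp (lam*\<Delta>) * exp (Re (- (complex_of_real \<Delta> * char \<nu> (-u))))"
    unfolding inv_phi norm_mult by (simp add: norm_exp_i_times[of "\<gamma>*\<Delta>*u", simplified])
  also have "\<dots> \<le> exp (lam*\<Delta>) * exp (\<bar>\<Delta>\<bar> * lam)" using r by simp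
  finally show ?thesis .
qed

lemma inv_phi_meas:
  assumes fin: "finite_measure \<nu>" and sets: "sets \<nu> = sets borel"
  shows "(\<lambda>u. inverse (phi \<Delta> \<gamma> lam \<nu> (-u))) \<in> borel_measurable borel"
proof -
  have [measurable]: "char \<nu> \<in> borel_measurable borel" by (rule char_meas[OF fin sets])
  show ?thesis unfolding inv_phi by measurable
qed

lemma sq_diff_le: fixes a b :: complex shows "(cmod (a - b))^2 \<le> 2 * (cmod a)^2 + 2 * (cmod b)^2"
proof -
  have "cmod (a - b) \<le> cmod a + cmod b" by (rule norm_triangle_ineq4)
  then have "(cmod (a - b))^2 \<le> (cmod a + cmod b)^2" by (intro power_mono) auto
  also have "\<dots> \<le> 2 * (cmod a)^2 + 2 * (cmod b)^2"
    using amgm[of "cmod a" "cmod b"] by (simp add: power2_sum)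
  finally show ?thesis .
qed


theorem lemma3p3:
  fixes \<Delta> \<gamma> lam h :: real and \<nu> :: "real measure" and K g :: "real \<Rightarrow> real"
    and G :: "real \<Rightarrow> complex"
  assumes "\<Delta> > 0" and "lam > 0"
    and "finite_measure \<nu>" and "sets \<nu> = sets borel" and "measure \<nu> UNIV = lam"
    and "integrable lborel K" and "integrable lborel (FT K)" and "continuous_on UNIV K"
    and "h > 0"
  shows "(\<forall>x. iFT (\<lambda>u. inverse (phi \<Delta> \<gamma> lam \<nu> (- u)) * FT (Kh K h) u) x
              = conv_inv_meas (\<lambda>y. complex_of_real (Kh K h y)) \<Delta> \<gamma> lam \<nu> x)
       \<and> ((K \<in> borel_measurable borel \<and> integrable lborel (\<lambda>x. (K x)\<^sup>2)
            \<and> g \<in> borel_measurable borel \<and> integrable lborel (\<lambda>x. (g x)\<^sup>2)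
            \<and> plancherel_FT g G)
          \<longrightarrow> (\<forall>x. iFT (\<lambda>u. G u * inverse (phi \<Delta> \<gamma> lam \<nu> (- u)) * FT (Kh K h) u) x
                 = conv_inv_meas (\<lambda>y. complex_of_real (fconv g (Kh K h) y)) \<Delta> \<gamma> lam \<nu> x))"
proof -
  note fin = assms(3) and sets = assms(4) and lam = assms(5)
  define f where "f = Kh K h"
  have cont: "continuous_on UNIV f" and int: "integrable lborel f" and intF: "integrable lborel (FT f)"
    unfolding f_def using Kh_props[OF assms(9,6,7,8)] by auto
  have fm[measurable]: "f \<in> borel_measurable borel" using cont by (rule cont_borel)
  have P1: "iFT (\<lambda>u. inverse (phi \<Delta> \<gamma> lam \<nu> (- u)) * FT f u) z
              = conv_inv_meas (\<lambda>y. complex_of_real (f y)) \<Delta> \<gamma> lam \<nu> z" for z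
    by (rule part1[OF fin sets lam cont int intF])
  show ?thesis
  proof (intro conjI impI allI)
    fix x show "iFT (\<lambda>u. inverse (phi \<Delta> \<gamma> lam \<nu> (- u)) * FT (Kh K h) u) x
              = conv_inv_meas (\<lambda>y. complex_of_real (Kh K h y)) \<Delta> \<gamma> lam \<nu> x"
      using P1 unfolding f_def .
  next
    fix x
    assume H: "K \<in> borel_measurable borel \<and> integrable lborel (\<lambda>x. (K x)\<^sup>2)
            \<and> g \<in> borel_measurable borel \<and> integrable lborel (\<lambda>x. (g x)\<^sup>2)
            \<and> plancherel_FT g G"
    then have K2: "integrable lborel (\<lambda>x. (K x)^2)" and gm[measurable]: "g \<in> borel_measurable borel"
      and g2: "integrable lborel (\<lambda>x. (g x)^2)" and pl: "plancherel_FT g G" by auto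
    from pl have Gm[measurable]: "G \<in> borel_measurable borel" and G2: "integrable lborel (\<lambda>u. (cmod (G u))^2)"
      and Glim: "(\<lambda>n::nat. \<integral>u. (cmod (G u - FT (\<lambda>x. indicator {- real n..real n} x * g x) u))^2 \<partial>lborel) \<longlonglongrightarrow> 0"
      unfolding plancherel_FT_def by auto
    have f2: "integrable lborel (\<lambda>x. (f x)^2)"
    proof -
      have "integrable lborel (\<lambda>x. (\<lambda>z. (K z)^2) (0 + (1/h) * x))" using assms(9) by (intro lborel_integrable_real_affine K2) auto
      then have "integrable lborel (\<lambda>x. (K (x/h))^2 / h^2)" by simp
      then show ?thesis unfolding f_def Kh_def by (simp add: power_divide)
    qed
    define B where "B = exp (lam*\<Delta>) * exp (\<bar>\<Delta>\<bar> * lam)"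
    define \<psi> where "\<psi> u = inverse (phi \<Delta> \<gamma> lam \<nu> (- u)) * FT f u" for u
    have [measurable]: "(\<lambda>u. inverse (phi \<Delta> \<gamma> lam \<nu> (-u))) \<in> borel_measurable borel"
      by (rule inv_phi_meas[OF fin sets])
    have [measurable]: "FT f \<in> borel_measurable borel" using fm by (rule FT_meas)
    have \<psi>m[measurable]: "\<psi> \<in> borel_measurable borel" unfolding \<psi>_def by measurable
    have B0: "B \<ge> 0" unfolding B_def by simp
    have \<psi>b: "norm (\<psi> u) \<le> B * norm (FT f u)" for u
      unfolding \<psi>_def B_def norm_mult by (intro mult_right_mono inv_phi_bound[OF fin sets lam]) auto
    define Lf where "Lf = (\<integral>x. \<bar>f x\<bar> \<partial>lborel)"
    have FTfb: "norm (FT f u) \<le> Lf" for u unfolding Lf_def by (rule FT_bound)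
    have \<psi>int: "integrable lborel \<psi>"
    proof (rule Bochner_Integration.integrable_bound)
      show "integrable lborel (\<lambda>u. B * norm (FT f u))" using intF by simp
      show "AE u in lborel. norm (\<psi> u) \<le> norm (B * norm (FT f u))" using \<psi>b B0 by (intro AE_I2) simp
    qed measurable
    have \<psi>2: "integrable lborel (\<lambda>u. (cmod (\<psi> u))^2)"
    proof (rule Bochner_Integration.integrable_bound)
      show "integrable lborel (\<lambda>u. (B^2 * Lf) * norm (FT f u))" using intF by simp
      show "AE u in lborel. norm ((cmod (\<psi> u))^2) \<le> norm ((B^2 * Lf) * norm (FT f u))"
      proof (intro AE_I2)
        fix u
        have Lf0: "Lf \<ge> 0" unfolding Lf_def by simp
        have "(cmod (\<psi> u))^2 \<le> (B * norm (FT f u))^2" using \<psi>b[of u] by (intro power_mono) auto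
        also have "\<dots> = B^2 * (norm (FT f u) * norm (FT f u))" by (simp add: power2_eq_square mult_ac)
        also have "\<dots> \<le> B^2 * (Lf * norm (FT f u))" using FTfb[of u] by (intro mult_left_mono mult_right_mono) auto
        finally show "norm ((cmod (\<psi> u))^2) \<le> norm ((B^2 * Lf) * norm (FT f u))" using Lf0 by (simp add: mult_ac)
      qed
    qed measurable
    define gn where "gn n y = indicator {- real n..real n} y * g y" for n :: nat and y
    have gnm[measurable]: "gn n \<in> borel_measurable borel" for n unfolding gn_def by measurable
    have gn_int: "integrable lborel (gn n)" for n
    proof (rule Bochner_Integration.integrable_bound)
      show "integrable lborel (\<lambda>y. indicator {- real n..real n} y + (g y)^2 :: real)"
        using g2 by (intro Bochner_Integration.integrable_add integrable_real_indicator) auto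
      show "AE y in lborel. norm (gn n y) \<le> norm (indicator {- real n..real n} y + (g y)^2 :: real)"
      proof (intro AE_I2)
        fix y
        have "\<bar>g y\<bar> \<le> 1 + (g y)^2" using amgm[of 1 "g y"] by simp
        then show "norm (gn n y) \<le> norm (indicator {- real n..real n} y + (g y)^2 :: real)"
          unfolding gn_def by (auto simp: indicator_def)
      qed
    qed measurable
    have gn2: "integrable lborel (\<lambda>y. (gn n y)^2)" for n
    proof (rule Bochner_Integration.integrable_bound[OF g2])
      show "AE y in lborel. norm ((gn n y)^2) \<le> norm ((g y)^2)"
        unfolding gn_def by (intro AE_I2) (auto simp: indicator_def)
    qed measurable
    have FTgn2: "integrable lborel (\<lambda>u. (cmod (FT (gn n) u))^2)" for n
      by (rule FT_L2[OF gnm gn_int gn2])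
    define A where "A n u = G u - FT (gn n) u" for n u
    have Am[measurable]: "A n \<in> borel_measurable borel" for n unfolding A_def using FT_meas[OF gnm[of n]] by measurable
    have A2: "integrable lborel (\<lambda>u. (cmod (A n u))^2)" for n
    proof (rule Bochner_Integration.integrable_bound)
      show "integrable lborel (\<lambda>u. 2 * (cmod (G u))^2 + 2 * (cmod (FT (gn n) u))^2)"
        using G2 FTgn2[of n] by simp
      show "AE u in lborel. norm ((cmod (A n u))^2) \<le> norm (2 * (cmod (G u))^2 + 2 * (cmod (FT (gn n) u))^2)"
        unfolding A_def using sq_diff_le by (intro AE_I2) simp
    qed measurable
    have Alim: "(\<lambda>n. \<integral>u. (cmod (A n u))^2 \<partial>lborel) \<longlonglongrightarrow> 0"
      using Glim unfolding A_def gn_def .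
    note LP = L2_prod_tendsto[of A \<psi>, OF Am \<psi>m A2 Alim \<psi>2]
    have G\<psi>int: "integrable lborel (\<lambda>u. G u * \<psi> u)"
    proof (rule Bochner_Integration.integrable_bound)
      show "integrable lborel (\<lambda>u. (cmod (G u))^2 / 2 + (cmod (\<psi> u))^2 / 2)" using G2 \<psi>2 by simp
      show "AE u in lborel. norm (G u * \<psi> u) \<le> norm ((cmod (G u))^2 / 2 + (cmod (\<psi> u))^2 / 2)"
      proof (intro AE_I2)
        fix u
        have "\<bar>cmod (G u) * cmod (\<psi> u)\<bar> \<le> (cmod (G u))^2 / 2 + (cmod (\<psi> u))^2 / 2" by (rule amgm)
        then show "norm (G u * \<psi> u) \<le> norm ((cmod (G u))^2 / 2 + (cmod (\<psi> u))^2 / 2)" by (simp add: norm_mult)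
      qed
    qed measurable
    have Gn\<psi>int: "integrable lborel (\<lambda>u. FT (gn n) u * \<psi> u)" for n
    proof (rule Bochner_Integration.integrable_bound)
      show "integrable lborel (\<lambda>u. (\<integral>x. \<bar>gn n x\<bar> \<partial>lborel) * norm (\<psi> u))" using \<psi>int by simp
      show "AE u in lborel. norm (FT (gn n) u * \<psi> u) \<le> norm ((\<integral>x. \<bar>gn n x\<bar> \<partial>lborel) * norm (\<psi> u))"
        using FT_bound[of "gn n"] by (intro AE_I2) (simp add: norm_mult mult_right_mono)
    qed (use FT_meas[OF gnm[of n]] in measurable)
    have lim1: "(\<lambda>n. iFT (\<lambda>u. FT (gn n) u * \<psi> u) x) \<longlonglongrightarrow> iFT (\<lambda>u. G u * \<psi> u) x"
    proof -
      have d: "norm (iFT (\<lambda>u. FT (gn n) u * \<psi> u) x - iFT (\<lambda>u. G u * \<psi> u) x)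
          \<le> (\<integral>u. cmod (A n u) * cmod (\<psi> u) \<partial>lborel)" for n
      proof -
        have dd: "iFT (\<lambda>u. G u * \<psi> u) x - iFT (\<lambda>u. FT (gn n) u * \<psi> u) x
            = complex_of_real (1/(2*pi)) * (\<integral>u. iexp (-(u*x)) * (A n u * \<psi> u) \<partial>lborel)"
        proof -
          have i1: "integrable lborel (\<lambda>u. iexp (-(u*x)) * (G u * \<psi> u))"
            by (rule Bochner_Integration.integrable_bound[OF G\<psi>int]) (auto simp: norm_mult)
          have i2: "integrable lborel (\<lambda>u. iexp (-(u*x)) * (FT (gn n) u * \<psi> u))"
            by (rule Bochner_Integration.integrable_bound[OF Gn\<psi>int[of n]]) (use FT_meas[OF gnm[of n]] in \<open>auto simp: norm_mult\<close>)
          have "(\<integral>u. iexp (-(u*x)) * (A n u * \<psi> u) \<partial>lborel)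
              = (\<integral>u. iexp (-(u*x)) * (G u * \<psi> u) - iexp (-(u*x)) * (FT (gn n) u * \<psi> u) \<partial>lborel)"
            unfolding A_def by (simp add: algebra_simps)
          also have "\<dots> = (\<integral>u. iexp (-(u*x)) * (G u * \<psi> u) \<partial>lborel) - (\<integral>u. iexp (-(u*x)) * (FT (gn n) u * \<psi> u) \<partial>lborel)"
            using i1 i2 by (rule Bochner_Integration.integral_diff)
          finally have X: "(\<integral>u. iexp (-(u*x)) * (A n u * \<psi> u) \<partial>lborel)
              = (\<integral>u. iexp (-(u*x)) * (G u * \<psi> u) \<partial>lborel) - (\<integral>u. iexp (-(u*x)) * (FT (gn n) u * \<psi> u) \<partial>lborel)" .
          show ?thesis unfolding iFT_def X right_diff_distrib ..
        qed
        have "norm (iFT (\<lambda>u. FT (gn n) u * \<psi> u) x - iFT (\<lambda>u. G u * \<psi> u) x)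
            = (1/(2*pi)) * norm (\<integral>u. iexp (-(u*x)) * (A n u * \<psi> u) \<partial>lborel)"
          by (subst norm_minus_commute, unfold dd norm_mult norm_of_real)
            (simp add: pi_gt_zero less_imp_le)
        also have "\<dots> \<le> 1 * norm (\<integral>u. iexp (-(u*x)) * (A n u * \<psi> u) \<partial>lborel)"
          using pi_gt3 by (intro mult_right_mono) auto
        also have "\<dots> \<le> (\<integral>u. norm (iexp (-(u*x)) * (A n u * \<psi> u)) \<partial>lborel)" by simp
        also have "\<dots> = (\<integral>u. cmod (A n u) * cmod (\<psi> u) \<partial>lborel)" by (simp add: norm_mult)
        finally show ?thesis .
      qed
      have "(\<lambda>n. iFT (\<lambda>u. FT (gn n) u * \<psi> u) x - iFT (\<lambda>u. G u * \<psi> u) x) \<longlonglongrightarrow> 0"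
        by (rule tendsto_norm_zero_cancel, rule Lim_null_comparison[OF _ LP(2)]) (use d in simp)
      then show ?thesis by (simp add: LIM_zero_iff)
    qed
    define C where "C z = conv_inv_meas (\<lambda>y. complex_of_real (f y)) \<Delta> \<gamma> lam \<nu> z" for z
    have rep: "iFT (\<lambda>u. FT (gn n) u * \<psi> u) x = (\<integral>y. complex_of_real (gn n y) * C (x - y) \<partial>lborel)" for n
    proof -
      have e: "iFT \<psi> z = C z" for z unfolding \<psi>_def C_def by (rule P1)
      show ?thesis unfolding ft_mult_iFT[OF gnm gn_int \<psi>m \<psi>int] e ..
    qed
    note R = part2_rep[OF fin sets lam cont int intF f2 gm g2, of \<Delta> \<gamma> x]
    have lim2: "(\<lambda>n. \<integral>y. complex_of_real (gn n y) * C (x - y) \<partial>lborel) \<longlonglongrightarrow> (\<integral>y. complex_of_real (g y) * C (x - y) \<partial>lborel)"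
    proof (rule integral_dominated_convergence[where w="\<lambda>y. norm (complex_of_real (g y) * C (x - y))"])
      show "integrable lborel (\<lambda>y. norm (complex_of_real (g y) * C (x - y)))"
        using R(1) unfolding C_def by simp
      show "(\<lambda>y. complex_of_real (g y) * C (x - y)) \<in> borel_measurable lborel"
        using R(1) unfolding C_def by (simp add: borel_measurable_integrable)
      have CE: "complex_of_real (gn n y) * C (x - y) = complex_of_real (indicator {- real n..real n} y) * (complex_of_real (g y) * C (x - y))" for n y
        unfolding gn_def by simp
      show "(\<lambda>y. complex_of_real (gn n y) * C (x - y)) \<in> borel_measurable lborel" for n
        unfolding CE using \<open>(\<lambda>y. complex_of_real (g y) * C (x - y)) \<in> borel_measurable lborel\<close> by measurable
      show "AE y in lborel. norm (complex_of_real (gn n y) * C (x - y)) \<le> norm (complex_of_real (g y) * C (x - y))" for n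
        unfolding gn_def by (intro AE_I2) (auto simp: indicator_def norm_mult)
      show "AE y in lborel. (\<lambda>n. complex_of_real (gn n y) * C (x - y)) \<longlonglongrightarrow> complex_of_real (g y) * C (x - y)"
      proof (intro AE_I2)
        fix y
        obtain N :: nat where "\<bar>y\<bar> \<le> real N" using real_arch_simple by blast
        then have "eventually (\<lambda>n. complex_of_real (g y) * C (x - y) = complex_of_real (gn n y) * C (x - y)) sequentially"
          unfolding eventually_sequentially gn_def by (intro exI[of _ N]) (auto simp: indicator_def abs_le_iff)
        then show "(\<lambda>n. complex_of_real (gn n y) * C (x - y)) \<longlonglongrightarrow> complex_of_real (g y) * C (x - y)"
          by (rule Lim_transform_eventually[OF tendsto_const])
      qed
    qed
    have "iFT (\<lambda>u. G u * \<psi> u) x = (\<integral>y. complex_of_real (g y) * C (x - y) \<partial>lborel)"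
      using LIMSEQ_unique[OF lim1 lim2[folded rep]] .
    also have "\<dots> = conv_inv_meas (\<lambda>y. complex_of_real (fconv g f y)) \<Delta> \<gamma> lam \<nu> x"
      using R(2) unfolding C_def .
    finally show "iFT (\<lambda>u. G u * inverse (phi \<Delta> \<gamma> lam \<nu> (- u)) * FT (Kh K h) u) x
                 = conv_inv_meas (\<lambda>y. complex_of_real (fconv g (Kh K h) y)) \<Delta> \<gamma> lam \<nu> x"
      unfolding \<psi>_def f_def by (simp add: mult.assoc)
  qed
qed


end
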